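(* Let $(G,\lambda)$ and $(G',\lambda')$ be finite abelian $2$-groups with nonsingular symmetric linking pairings and $k\ge1$. If the layer forms $b_k$ of both are alternating, then the layer form $b_k$ of the orthogonal sum $(G\oplus G',\lambda\oplus\lambda')$ is alternating and $u_k(G\oplus G',\lambda\oplus\lambda')\equiv u_k(G,\lambda)+u_k(G',\lambda')\pmod 8$.
   Context: $G_k=\{x\in G:2^kx=0\}$, $P_k(G)=G_k/(G_{k-1}+2G_{k+1})$ with $\mathbb F_2$-form $b_k(\bar x,\bar y)=2^k\lambda(x,y)\bmod 2$. When $b_k$ is alternating, $q_k:H_k(G)=G/G_k\to\mathbb Q/\mathbb Z$, $q_k(\bar x)=2^{k-1}\lambda(x,x)$, is well defined, $\gamma_k=|H_k(G)|^{-1/2}\sum_{\bar x\in H_k(G)}\exp(2\pi iq_k(\bar x))$ is an eighth root of unity, and $u_k\in\mathbb Z/8$ is defined by $\gamma_k=\exp(\pi i u_k/4)$. *)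

theory Defs
  imports "HOL-Analysis.Analysis" "HOL-Library.Product_Plus"
begin

text \<open>Finite abelian groups are modelled as finite types of class ab_group_add
(the group is the whole type).  Values in Q/Z are represented by rationals
taken modulo the integers.\<close>

definition nmul :: "nat \<Rightarrow> 'a::ab_group_add \<Rightarrow> 'a" where
  "nmul n x = (\<Sum>i<n. x)"

definition two_group :: "'a::{finite,ab_group_add} itself \<Rightarrow> bool" where
  "two_group _ \<longleftrightarrow> (\<forall>x::'a. \<exists>n. nmul (2^n) x = 0)"

definition linking_pairing :: "('a::{finite,ab_group_add} \<Rightarrow> 'a \<Rightarrow> rat) \<Rightarrow> bool" where
  "linking_pairing lam \<longleftrightarrow>
     (\<forall>x y z. lam (x + y) z - lam x z - lam y z \<in> \<int>) \<and>
     (\<forall>x y z. lam x (y + z) - lam x y - lam x z \<in> \<int>) \<and>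
     (\<forall>x y. lam x y - lam y x \<in> \<int>) \<and>
     (\<forall>x. (\<forall>y. lam x y \<in> \<int>) \<longrightarrow> x = 0)"

definition orth_sum ::
  "('a \<Rightarrow> 'a \<Rightarrow> rat) \<Rightarrow> ('b \<Rightarrow> 'b \<Rightarrow> rat) \<Rightarrow> ('a \<times> 'b) \<Rightarrow> ('a \<times> 'b) \<Rightarrow> rat" where
  "orth_sum lam lam' = (\<lambda>(x, x') (y, y'). lam x y + lam' x' y')"

definition Gk :: "nat \<Rightarrow> 'a::ab_group_add set" where
  "Gk k = {x. nmul (2^k) x = 0}"

text \<open>The layer quotient P_k(G) = G_k / (G_{k-1} + 2 G_{k+1}) as a set of cosets.\<close>
definition Pk :: "nat \<Rightarrow> 'a::ab_group_add set set" where
  "Pk k = (\<lambda>x. (\<lambda>y. x + y) ` {a + nmul 2 b | a b. a \<in> Gk (k - 1) \<and> b \<in> Gk (k + 1)}) ` Gk k"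

text \<open>b_k(x,y) = 2^k lam(x,y) mod 2, computed on representatives in G_k (value in {0,1}).\<close>
definition bk :: "('a \<Rightarrow> 'a \<Rightarrow> rat) \<Rightarrow> nat \<Rightarrow> 'a \<Rightarrow> 'a \<Rightarrow> rat" where
  "bk lam k x y = (2^k * lam x y) - 2 * of_int \<lfloor>(2^k * lam x y) / 2\<rfloor>"

definition bk_alternating :: "('a::ab_group_add \<Rightarrow> 'a \<Rightarrow> rat) \<Rightarrow> nat \<Rightarrow> bool" where
  "bk_alternating lam k \<longleftrightarrow> (\<forall>X\<in>Pk k. \<forall>x\<in>X. bk lam k x x = 0)"

definition Hk :: "nat \<Rightarrow> 'a::ab_group_add set set" where
  "Hk k = range (\<lambda>x. (\<lambda>y. x + y) ` Gk k)"

definition qk :: "('a \<Rightarrow> 'a \<Rightarrow> rat) \<Rightarrow> nat \<Rightarrow> 'a set \<Rightarrow> rat" where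
  "qk lam k X = (let x = (SOME x. x \<in> X) in 2^(k-1) * lam x x)"

definition gammak :: "('a::{finite,ab_group_add} \<Rightarrow> 'a \<Rightarrow> rat) \<Rightarrow> nat \<Rightarrow> complex" where
  "gammak lam k = complex_of_real (1 / sqrt (real (card (Hk k :: 'a set set)))) *
     (\<Sum>X\<in>Hk k. exp (2 * pi * \<i> * complex_of_real (real_of_rat (qk lam k X))))"

definition uk :: "('a::{finite,ab_group_add} \<Rightarrow> 'a \<Rightarrow> rat) \<Rightarrow> nat \<Rightarrow> int" where
  "uk lam k = (SOME u. u \<in> {0..7} \<and> gammak lam k = exp (pi * \<i> * of_int u / 4))"

end

theory Submission
  imports Defs
begin

definition E :: "rat \<Rightarrow> complex" where
  "E t = exp (2 * pi * \<i> * complex_of_real (real_of_rat t))"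

lemma E_add: "E (s + t) = E s * E t"
  unfolding E_def by (simp add: of_rat_add distrib_left exp_add)

lemma E_cis: "E t = cis (2 * pi * real_of_rat t)"
  unfolding E_def cis_conv_exp by (simp add: mult_ac)

lemma E_int: assumes "t \<in> \<int>" shows "E t = 1"
proof -
  from assms obtain n where n: "t = of_int n" by (auto elim: Ints_cases)
  have "real_of_rat t \<in> \<int>" using n by simp
  then show ?thesis unfolding E_cis by (rule cis_multiple_2pi)
qed

lemma E_cong: assumes "s - t \<in> \<int>" shows "E s = E t"
proof -
  have "E s = E (t + (s - t))" by simp
  also have "\<dots> = E t * E (s - t)" by (rule E_add)
  also have "\<dots> = E t" using E_int[OF assms] by simp
  finally show ?thesis .
qed

lemma E_half: "E (1/2) = -1"
  unfolding E_def by (simp add: of_rat_divide)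

lemma E_quarter: "E (1/4) = \<i>"
proof -
  have "2 * pi * real_of_rat (1/4) = pi / 2" by (simp add: of_rat_divide)
  then have "E (1/4) = cis (pi/2)" unfolding E_cis by metis
  then show ?thesis by (simp add: complex_eq_iff)
qed

lemma E_3quarter: "E (3/4) = -\<i>"
proof -
  have "E (3/4) = E (1/2) * E (1/4)" using E_add[of "1/2" "1/4"] by simp
  then show ?thesis by (simp add: E_half E_quarter)
qed

lemma E_pow: "E t ^ n = E (of_nat n * t)"
proof (induction n)
  case 0 then show ?case by (simp add: E_def)
next
  case (Suc n)
  have "E t ^ Suc n = E t * E (of_nat n * t)" using Suc by simp
  also have "\<dots> = E (t + of_nat n * t)" by (simp add: E_add)
  finally show ?case by (simp add: algebra_simps)
qed

lemma half_int: fixes a :: rat assumes "2 * a \<in> \<int>" "a \<notin> \<int>" shows "a - 1/2 \<in> \<int>"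
proof -
  from assms(1) obtain n where n: "2 * a = of_int n" by (auto elim: Ints_cases)
  show ?thesis
  proof (cases "even n")
    case True then obtain m where "n = 2*m" by auto
    then have "a = of_int m" using n by simp
    then show ?thesis using assms(2) by simp
  next
    case False then obtain m where "n = 2*m+1" using oddE by blast
    then have "a - 1/2 = of_int m" using n by (simp add: field_simps)
    then show ?thesis by simp
  qed
qed

lemma ints_lin: "a \<in> \<int> \<Longrightarrow> b \<in> \<int> \<Longrightarrow> c = of_int m * a + of_int n * b \<Longrightarrow> (c::'b::ring_1) \<in> \<int>"
  by (simp add: Ints_add Ints_mult)


definition zeq :: "rat \<Rightarrow> rat \<Rightarrow> bool" (infix "\<doteq>" 50) where
  "a \<doteq> b \<longleftrightarrow> a - b \<in> \<int>"

lemma zeq_refl[simp]: "a \<doteq> a" by (simp add: zeq_def)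
lemma zeq_sym: "a \<doteq> b \<Longrightarrow> b \<doteq> a"
  unfolding zeq_def using Ints_minus[of "a - b"] by simp
lemma zeq_trans[trans]: "a \<doteq> b \<Longrightarrow> b \<doteq> c \<Longrightarrow> a \<doteq> c"
  unfolding zeq_def using Ints_add[of "a - b" "b - c"] by simp
lemma zeq_eq_trans[trans]: "a = b \<Longrightarrow> b \<doteq> c \<Longrightarrow> a \<doteq> c" by simp
lemma eq_zeq_trans[trans]: "a \<doteq> b \<Longrightarrow> b = c \<Longrightarrow> a \<doteq> c" by simp
lemma zeq_add: "a \<doteq> a' \<Longrightarrow> b \<doteq> b' \<Longrightarrow> a + b \<doteq> a' + b'"
  unfolding zeq_def proof -
  assume "a - a' \<in> \<int>" "b - b' \<in> \<int>"
  then have "(a - a') + (b - b') \<in> \<int>" by (rule Ints_add)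
  then show "a + b - (a' + b') \<in> \<int>" by (simp add: algebra_simps)
qed
lemma zeq_minus: "a \<doteq> a' \<Longrightarrow> - a \<doteq> - a'"
  unfolding zeq_def using Ints_minus[of "a - a'"] by simp
lemma zeq_diff: "a \<doteq> a' \<Longrightarrow> b \<doteq> b' \<Longrightarrow> a - b \<doteq> a' - b'"
  using zeq_add[of a a' "-b" "-b'"] zeq_minus by auto
lemma zeq_mult: "c \<in> \<int> \<Longrightarrow> a \<doteq> a' \<Longrightarrow> c * a \<doteq> c * a'"
  unfolding zeq_def proof -
  assume "c \<in> \<int>" "a - a' \<in> \<int>"
  then have "c * (a - a') \<in> \<int>" by (rule Ints_mult)
  then show "c * a - c * a' \<in> \<int>" by (simp add: algebra_simps)
qed
lemma zeq_Ints: "a \<doteq> b \<Longrightarrow> b \<in> \<int> \<Longrightarrow> a \<in> \<int>"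
  unfolding zeq_def using Ints_add[of "a - b" b] by simp
lemma zeq_Ints_iff: "a \<doteq> b \<Longrightarrow> a \<in> \<int> \<longleftrightarrow> b \<in> \<int>"
  using zeq_Ints zeq_sym by blast
lemma Ints_zeq0: "a \<in> \<int> \<Longrightarrow> a \<doteq> 0" by (simp add: zeq_def)
lemma zeq0_Ints: "a \<doteq> 0 \<Longrightarrow> a \<in> \<int>" by (simp add: zeq_def)
lemma zeq_E: "a \<doteq> b \<Longrightarrow> E a = E b" unfolding zeq_def by (rule E_cong)

fun p2 :: "nat \<Rightarrow> 'a::ab_group_add \<Rightarrow> 'a" where
  "p2 0 y = y" | "p2 (Suc n) y = p2 n y + p2 n y"

definition subgrp :: "'a::ab_group_add set \<Rightarrow> bool" where
  "subgrp L \<longleftrightarrow> 0 \<in> L \<and> (\<forall>x\<in>L. \<forall>y\<in>L. x + y \<in> L) \<and> (\<forall>x\<in>L. -x \<in> L)"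

lemma subgrp_0: "subgrp L \<Longrightarrow> 0 \<in> L" by (simp add: subgrp_def)
lemma subgrp_add: "subgrp L \<Longrightarrow> x \<in> L \<Longrightarrow> y \<in> L \<Longrightarrow> x + y \<in> L" by (simp add: subgrp_def)
lemma subgrp_neg: "subgrp L \<Longrightarrow> x \<in> L \<Longrightarrow> -x \<in> L" by (simp add: subgrp_def)
lemma subgrp_diff: "subgrp L \<Longrightarrow> x \<in> L \<Longrightarrow> y \<in> L \<Longrightarrow> x - y \<in> L"
  using subgrp_add[of L x "-y"] subgrp_neg[of L y] by simp
lemma subgrp_p2: "subgrp L \<Longrightarrow> y \<in> L \<Longrightarrow> p2 n y \<in> L"
  by (induction n) (auto simp: subgrp_add)

locale qf =
  fixes q :: "'a::ab_group_add \<Rightarrow> rat" and b :: "'a \<Rightarrow> 'a \<Rightarrow> rat"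
  assumes badd: "b (x+y) z - b x z - b y z \<in> \<int>"
  and bsym: "b x y - b y x \<in> \<int>"
  and qadd: "q (x+y) - q x - q y - b x y \<in> \<int>"
  and qdiag: "b x x - 2 * q x \<in> \<int>"
  and q0: "q 0 \<in> \<int>"
begin

definition R :: "'a set \<Rightarrow> 'a set" where "R L = {z\<in>L. \<forall>w\<in>L. b z w \<in> \<int>}"
definition S :: "'a set \<Rightarrow> complex" where "S L = (\<Sum>w\<in>L. E (q w))"

lemma b_addl: "b (x+y) z \<doteq> b x z + b y z"
  using badd[of x y z] unfolding zeq_def by (simp add: algebra_simps)
lemma b_sym: "b x y \<doteq> b y x" using bsym unfolding zeq_def by simp
lemma q_add: "q (x+y) \<doteq> q x + q y + b x y"
  using qadd[of x y] unfolding zeq_def by (simp add: algebra_simps)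
lemma q_diag: "b x x \<doteq> 2 * q x" using qdiag unfolding zeq_def by simp
lemma b_0l: "b 0 z \<in> \<int>"
proof -
  have "b (0+0) z - b 0 z - b 0 z \<in> \<int>" by (rule badd)
  then have "- (b 0 z) \<in> \<int>" by simp
  then show ?thesis using Ints_minus[of "- b 0 z"] by simp
qed
lemma b_0r: "b z 0 \<in> \<int>" using b_0l[of z] b_sym[of z 0] zeq_Ints by blast
lemma b_addr: "b x (y+z) \<doteq> b x y + b x z"
proof -
  have "b x (y+z) \<doteq> b (y+z) x" by (rule b_sym)
  also have "\<dots> \<doteq> b y x + b z x" by (rule b_addl)
  also have "\<dots> \<doteq> b x y + b x z" by (intro zeq_add b_sym)
  finally show ?thesis .
qed
lemma b_negl: "b (-x) z \<doteq> - b x z"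
proof -
  have "b 0 z \<doteq> b x z + b (-x) z" using b_addl[of x "-x" z] by simp
  then have "0 \<doteq> b x z + b (-x) z" using b_0l[of z] zeq_trans zeq_sym Ints_zeq0 by blast
  then show ?thesis unfolding zeq_def using Ints_minus[of "0 - (b x z + b (-x) z)"] by (simp add: algebra_simps)
qed
lemma b_negr: "b z (-x) \<doteq> - b z x"
proof -
  have "b z (-x) \<doteq> b (-x) z" by (rule b_sym)
  also have "\<dots> \<doteq> - b x z" by (rule b_negl)
  also have "\<dots> \<doteq> - b z x" by (intro zeq_minus b_sym)
  finally show ?thesis .
qed
lemma b_diffl: "b (x - y) z \<doteq> b x z - b y z"
proof -
  have "b (x - y) z \<doteq> b x z + b (-y) z" using b_addl[of x "-y" z] by simp
  also have "\<dots> \<doteq> b x z + (- b y z)" by (intro zeq_add b_negl zeq_refl)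
  finally show ?thesis by simp
qed
lemma b_diffr: "b z (x - y) \<doteq> b z x - b z y"
proof -
  have "b z (x - y) \<doteq> b (x - y) z" by (rule b_sym)
  also have "\<dots> \<doteq> b x z - b y z" by (rule b_diffl)
  also have "\<dots> \<doteq> b z x - b z y" by (intro zeq_diff b_sym)
  finally show ?thesis .
qed
lemma b_dbll: "b (x+x) z \<doteq> 2 * b x z"
proof -
  have "b (x+x) z \<doteq> b x z + b x z" by (rule b_addl)
  also have "b x z + b x z = 2 * b x z" by simp
  finally show ?thesis .
qed
lemma b_dblr: "b z (x+x) \<doteq> 2 * b z x"
proof -
  have "b z (x+x) \<doteq> b z x + b z x" by (rule b_addr)
  also have "b z x + b z x = 2 * b z x" by simp
  finally show ?thesis .
qed
lemma q_dbl: "q (x+x) \<doteq> 4 * q x"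
proof -
  have "q (x+x) \<doteq> q x + q x + b x x" by (rule q_add)
  also have "\<dots> \<doteq> q x + q x + 2 * q x" by (intro zeq_add q_diag zeq_refl)
  also have "q x + q x + 2 * q x = 4 * q x" by simp
  finally show ?thesis .
qed

end

lemma half_not_int: "(1/2::rat) \<notin> \<int>"
proof
  assume "(1/2::rat) \<in> \<int>"
  then obtain n where "(1/2::rat) = of_int n" by (auto elim: Ints_cases)
  then have "(of_int 1::rat) = of_int (2*n)" by (simp add: field_simps)
  then have "1 = 2*n" by (simp only: of_int_eq_iff)
  then show False by presburger
qed

lemma zeq_half_not_int: "a \<doteq> 1/2 \<Longrightarrow> a \<notin> \<int>"
  using zeq_Ints[of "1/2" a] zeq_sym[of a "1/2"] half_not_int by auto

lemma half_zeq: "2 * a \<in> \<int> \<Longrightarrow> a \<notin> \<int> \<Longrightarrow> a \<doteq> 1/2"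
  using half_int unfolding zeq_def by blast

context qf
begin

lemma R_sub: "R L \<subseteq> L" by (auto simp: R_def)
lemma R_0: "subgrp L \<Longrightarrow> 0 \<in> R L" by (auto simp: R_def subgrp_0 b_0l)
lemma R_diff: assumes "subgrp L" "z1 \<in> R L" "z2 \<in> R L" shows "z1 - z2 \<in> R L"
proof -
  have "z1 - z2 \<in> L" using assms by (auto simp: R_def subgrp_diff)
  moreover have "b (z1 - z2) w \<in> \<int>" if "w \<in> L" for w
  proof -
    have "b (z1 - z2) w \<doteq> b z1 w - b z2 w" by (rule b_diffl)
    moreover have "b z1 w - b z2 w \<in> \<int>" using assms that by (auto simp: R_def)
    ultimately show ?thesis using zeq_Ints by blast
  qed
  ultimately show ?thesis by (auto simp: R_def)
qed

lemma radical_same: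
  assumes "L' \<subseteq> L" "R L \<subseteq> L'" "\<forall>z\<in>L'. \<forall>w\<in>L. \<exists>w'\<in>L'. b z w \<doteq> b z w'"
  shows "R L' = R L"
proof
  show "R L' \<subseteq> R L"
  proof
    fix z assume z: "z \<in> R L'"
    then have zL: "z \<in> L'" by (auto simp: R_def)
    have "b z w \<in> \<int>" if "w \<in> L" for w
    proof -
      from assms(3) zL that obtain w' where "w' \<in> L'" "b z w \<doteq> b z w'" by meson
      moreover have "b z w' \<in> \<int>" using z \<open>w' \<in> L'\<close> by (auto simp: R_def)
      ultimately show ?thesis using zeq_Ints by blast
    qed
    then show "z \<in> R L" using zL assms(1) by (auto simp: R_def)
  qed
next
  show "R L \<subseteq> R L'" using assms(1,2) by (auto simp: R_def)
qed

lemma split_S: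
  assumes "finite L'" "finite P" "bij_betw (\<lambda>(w,p). w + \<phi> p) (L' \<times> P) L"
    and "\<forall>w\<in>L'. \<forall>p\<in>P. q (w + \<phi> p) \<doteq> q w + q (\<phi> p)"
  shows "S L = S L' * (\<Sum>p\<in>P. E (q (\<phi> p)))"
proof -
  have "(\<Sum>x\<in>L' \<times> P. E (q ((\<lambda>(w,p). w + \<phi> p) x))) = (\<Sum>x\<in>L. E (q x))"
    by (rule sum.reindex_bij_betw[OF assms(3)])
  then have "S L = (\<Sum>x\<in>L' \<times> P. E (q ((\<lambda>(w,p). w + \<phi> p) x)))"
    unfolding S_def by (rule sym)
  also have "\<dots> = (\<Sum>(w,p)\<in>L' \<times> P. E (q w) * E (q (\<phi> p)))"
  proof (rule sum.cong)
    fix x assume x: "x \<in> L' \<times> P"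
    obtain w p where wp: "x = (w, p)" by (cases x)
    have "q (w + \<phi> p) \<doteq> q w + q (\<phi> p)" using assms(4) x wp by auto
    then have "E (q (w + \<phi> p)) = E (q w + q (\<phi> p))" by (rule zeq_E)
    then show "E (q ((\<lambda>(w,p). w + \<phi> p) x)) = (\<lambda>(w,p). E (q w) * E (q (\<phi> p))) x"
      using wp by (simp add: E_add)
  qed simp
  also have "\<dots> = (\<Sum>w\<in>L'. \<Sum>p\<in>P. E (q w) * E (q (\<phi> p)))"
    by (rule sum.cartesian_product[symmetric])
  also have "\<dots> = S L' * (\<Sum>p\<in>P. E (q (\<phi> p)))"
    unfolding S_def by (simp add: sum_product)
  finally show ?thesis .
qed

end

context qf begin
lemma half_split:
  assumes L: "subgrp L" "finite L" and a: "a \<in> L"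
    and h2: "\<forall>w\<in>L. 2 * b v w \<in> \<int>" and ha: "b v a \<doteq> 1/2"
  shows "subgrp {w\<in>L. b v w \<in> \<int>}"
    and "\<forall>w\<in>L. w \<in> {w\<in>L. b v w \<in> \<int>} \<or> w - a \<in> {w\<in>L. b v w \<in> \<int>}"
    and "bij_betw (\<lambda>(w,s). w + s) ({w\<in>L. b v w \<in> \<int>} \<times> {0,a}) L"
    and "card L = 2 * card {w\<in>L. b v w \<in> \<int>}"
    and "a \<noteq> 0"
proof -
  define L1 where "L1 = {w\<in>L. b v w \<in> \<int>}"
  have nai: "b v a \<notin> \<int>" using ha zeq_half_not_int by blast
  show a0: "a \<noteq> 0" using nai b_0r by auto
  show sg: "subgrp L1" unfolding subgrp_def L1_def
  proof (intro conjI ballI)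
    show "0 \<in> {w \<in> L. b v w \<in> \<int>}" using L b_0r subgrp_0 by auto
  next
    fix x y assume "x \<in> {w \<in> L. b v w \<in> \<int>}" "y \<in> {w \<in> L. b v w \<in> \<int>}"
    moreover have "b v (x + y) \<doteq> b v x + b v y" by (rule b_addr)
    ultimately show "x + y \<in> {w \<in> L. b v w \<in> \<int>}"
      using L subgrp_add[of L x y] zeq_Ints[of "b v (x + y)" "b v x + b v y"] Ints_add by auto
  next
    fix x assume "x \<in> {w \<in> L. b v w \<in> \<int>}"
    moreover have "b v (- x) \<doteq> - b v x" by (rule b_negr)
    ultimately show "- x \<in> {w \<in> L. b v w \<in> \<int>}"
      using L subgrp_neg[of L x] zeq_Ints[of "b v (- x)" "- b v x"] Ints_minus by auto
  qed
  have cover: "w \<in> L1 \<or> w - a \<in> L1" if w: "w \<in> L" for w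
  proof (cases "b v w \<in> \<int>")
    case True then show ?thesis using w by (auto simp: L1_def)
  next
    case False
    then have h: "b v w \<doteq> 1/2" using h2 w half_zeq by blast
    have "b v (w - a) \<doteq> b v w - b v a" by (rule b_diffr)
    also have "\<dots> \<doteq> 1/2 - 1/2" using h ha by (rule zeq_diff)
    finally have "b v (w - a) \<in> \<int>" using zeq0_Ints by simp
    then show ?thesis using w a L by (auto simp: L1_def subgrp_diff)
  qed
  then show "\<forall>w\<in>L. w \<in> {w\<in>L. b v w \<in> \<int>} \<or> w - a \<in> {w\<in>L. b v w \<in> \<int>}"
    unfolding L1_def by blast
  have notin: "w + a \<notin> L1" if "w \<in> L1" for w
  proof
    assume "w + a \<in> L1"
    have "b v (w + a) \<doteq> b v w + b v a" by (rule b_addr)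
    also have "\<dots> \<doteq> 0 + 1/2" using that ha by (intro zeq_add Ints_zeq0) (auto simp: L1_def)
    finally show False using \<open>w + a \<in> L1\<close> zeq_half_not_int by (auto simp: L1_def)
  qed
  have bij: "bij_betw (\<lambda>(w,s). w + s) (L1 \<times> {0,a}) L"
    unfolding bij_betw_def
  proof
    show "inj_on (\<lambda>(w,s). w + s) (L1 \<times> {0,a})"
    proof (rule inj_onI, clarify)
      fix w1 s1 w2 s2 assume h: "w1 \<in> L1" "s1 \<in> {0,a}" "w2 \<in> L1" "s2 \<in> {0,a}" "w1 + s1 = w2 + s2"
      show "w1 = w2 \<and> s1 = s2"
      proof (cases "s1 = s2")
        case True then show ?thesis using h by simp
      next
        case False
        then have "(s1 = 0 \<and> s2 = a) \<or> (s1 = a \<and> s2 = 0)" using h a0 by auto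
        then show ?thesis
        proof
          assume "s1 = 0 \<and> s2 = a" then have "w1 = w2 + a" using h by simp
          then show ?thesis using notin h by blast
        next
          assume "s1 = a \<and> s2 = 0" then have "w2 = w1 + a" using h by simp
          then show ?thesis using notin h by blast
        qed
      qed
    qed
  next
    show "(\<lambda>(w,s). w + s) ` (L1 \<times> {0,a}) = L"
    proof
      show "(\<lambda>(w,s). w + s) ` (L1 \<times> {0,a}) \<subseteq> L"
        using L a by (auto simp: L1_def subgrp_add)
    next
      show "L \<subseteq> (\<lambda>(w,s). w + s) ` (L1 \<times> {0,a})"
      proof
        fix w assume w: "w \<in> L"
        show "w \<in> (\<lambda>(w,s). w + s) ` (L1 \<times> {0,a})"
        proof (cases "w \<in> L1")
          case True then show ?thesis by (intro image_eqI[of _ _ "(w,0)"]) auto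
        next
          case False then have "w - a \<in> L1" using cover w by blast
          then show ?thesis by (intro image_eqI[of _ _ "(w - a,a)"]) auto
        qed
      qed
    qed
  qed
  then show "bij_betw (\<lambda>(w,s). w + s) ({w\<in>L. b v w \<in> \<int>} \<times> {0,a}) L" unfolding L1_def .
  have "finite L1" using L by (auto simp: L1_def)
  then have "card L = card L1 * 2" using bij_betw_same_card[OF bij] a0 by (simp add: card_cartesian_product)
  then show "card L = 2 * card {w\<in>L. b v w \<in> \<int>}" unfolding L1_def by simp
qed

end

lemma zeq_drop: "a \<doteq> c + x \<Longrightarrow> x \<in> \<int> \<Longrightarrow> a \<doteq> c"
  unfolding zeq_def using Ints_add[of "a - (c + x)" x] by (simp add: algebra_simps)

lemma root8_a: "((1 + \<i>) / complex_of_real (sqrt 2)) ^ 8 = 1"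
proof -
  have s: "complex_of_real (sqrt 2) * complex_of_real (sqrt 2) = 2"
    by (simp flip: of_real_mult)
  have "((1 + \<i>) / complex_of_real (sqrt 2)) ^ 2 = \<i>"
    by (simp add: power_divide power2_eq_square s algebra_simps)
  then have "((1 + \<i>) / complex_of_real (sqrt 2)) ^ 8 = \<i> ^ 4"
    by (metis power_mult num_double numeral_times_numeral)
  then show ?thesis by simp
qed

lemma root8_b: "((1 - \<i>) / complex_of_real (sqrt 2)) ^ 8 = 1"
proof -
  have s: "complex_of_real (sqrt 2) * complex_of_real (sqrt 2) = 2"
    by (simp flip: of_real_mult)
  have "((1 - \<i>) / complex_of_real (sqrt 2)) ^ 2 = - \<i>"
    by (simp add: power_divide power2_eq_square s algebra_simps)
  then have "((1 - \<i>) / complex_of_real (sqrt 2)) ^ 8 = (- \<i>) ^ 4"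
    by (metis power_mult num_double numeral_times_numeral)
  then show ?thesis by simp
qed

lemma finish:
  assumes "S1 = S2 * c" "S2 = z * complex_of_real (sqrt (real (n2 * r)))"
    "n1 = m * n2" "c = complex_of_real (sqrt (real m)) * d"
  shows "S1 = (z * d) * complex_of_real (sqrt (real (n1 * r)))"
proof -
  have "sqrt (real (n1 * r)) = sqrt (real m) * sqrt (real (n2 * r))"
    using assms(3) by (simp add: real_sqrt_mult[symmetric] mult_ac)
  then show ?thesis using assms by (simp add: mult_ac)
qed


context qf begin

lemma b_split: "b y w \<doteq> b y (w - u) + b y u"
  using b_addr[of y "w - u" u] by simp

lemma dbl_R: "x + x \<in> R L \<Longrightarrow> w \<in> L \<Longrightarrow> 2 * b x w \<in> \<int>"
proof -
  assume "x + x \<in> R L" "w \<in> L"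
  then have "b (x+x) w \<in> \<int>" by (auto simp: R_def)
  moreover have "b (x+x) w \<doteq> 2 * b x w" by (rule b_dbll)
  ultimately show "2 * b x w \<in> \<int>" using zeq_Ints zeq_sym by blast
qed

lemma b_Ints_sym: "b x y \<in> \<int> \<Longrightarrow> b y x \<in> \<int>"
  using b_sym[of y x] zeq_Ints by blast

lemma double_split:
  assumes L: "subgrp L" "finite L" and v: "v \<in> L" and a: "a \<in> L"
    and hv: "\<forall>w\<in>L. 2 * b v w \<in> \<int>" and hva: "b v a \<doteq> 1/2"
    and ha: "\<forall>w\<in>L. b v w \<in> \<int> \<longrightarrow> 2 * b a w \<in> \<int>" and hav: "b a v \<doteq> 1/2"
    and hvv: "b v v \<in> \<int>"
  shows "subgrp {w\<in>L. b v w \<in> \<int> \<and> b a w \<in> \<int>}"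
    and "card L = 4 * card {w\<in>L. b v w \<in> \<int> \<and> b a w \<in> \<int>}"
    and "R {w\<in>L. b v w \<in> \<int> \<and> b a w \<in> \<int>} = R L"
    and "S L = S {w\<in>L. b v w \<in> \<int> \<and> b a w \<in> \<int>} * (1 + E (q v) + E (q a) + E (q (v + a)))"
proof -
  define L1 where "L1 = {w\<in>L. b v w \<in> \<int>}"
  define L' where "L' = {w\<in>L1. b a w \<in> \<int>}"
  have L'eq: "{w\<in>L. b v w \<in> \<int> \<and> b a w \<in> \<int>} = L'" by (auto simp: L'_def L1_def)
  note H1 = half_split[OF L a hv hva, folded L1_def]
  have L1: "subgrp L1" "finite L1" using H1(1) L(2) by (auto simp: L1_def)
  have vL1: "v \<in> L1" using v hvv by (simp add: L1_def)
  have ha1: "\<forall>w\<in>L1. 2 * b a w \<in> \<int>" using ha by (auto simp: L1_def)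
  note H2 = half_split[OF L1 vL1 ha1 hav, folded L'_def]
  have L'L: "L' \<subseteq> L" by (auto simp: L'_def L1_def)
  have fin': "finite L'" using L(2) L'L finite_subset by blast
  show "subgrp {w\<in>L. b v w \<in> \<int> \<and> b a w \<in> \<int>}" using H2(1) L'eq by simp
  show "card L = 4 * card {w\<in>L. b v w \<in> \<int> \<and> b a w \<in> \<int>}" using H1(4) H2(4) L'eq by simp
  have orth: "b z u \<in> \<int>" "b u z \<in> \<int>" if "z \<in> L'" "u \<in> {0,v} \<union> {0,a}" for z u
  proof -
    have "b u z \<in> \<int>" using that b_0l by (auto simp: L'_def L1_def)
    then show "b u z \<in> \<int>" "b z u \<in> \<int>" using b_Ints_sym by auto
  qed
  have decomp: "\<exists>w'\<in>L'. \<exists>s\<in>{0,v}. \<exists>t\<in>{0,a}. w = w' + (s + t)" if "w \<in> L" for w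
  proof -
    have "w \<in> (\<lambda>(w,s). w + s) ` (L1 \<times> {0,a})" using H1(3) that by (simp add: bij_betw_def)
    then obtain w1 t where wt: "w1 \<in> L1" "t \<in> {0,a}" "w = w1 + t" by auto
    have "w1 \<in> (\<lambda>(w,s). w + s) ` (L' \<times> {0,v})" using H2(3) wt(1) by (simp add: bij_betw_def)
    then obtain w' s where ws: "w' \<in> L'" "s \<in> {0,v}" "w1 = w' + s" by auto
    show ?thesis using wt ws by (intro bexI[of _ w'] bexI[of _ s] bexI[of _ t]) (auto simp: add.assoc)
  qed
  have bij: "bij_betw (\<lambda>(w,p). w + (\<lambda>(s,t). s + t) p) (L' \<times> ({0,v} \<times> {0,a})) L"
    unfolding bij_betw_def
  proof
    show "inj_on (\<lambda>(w,p). w + (\<lambda>(s,t). s + t) p) (L' \<times> ({0,v} \<times> {0,a}))"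
    proof (rule inj_onI)
      fix x y assume x: "x \<in> L' \<times> ({0,v} \<times> {0,a})" and y: "y \<in> L' \<times> ({0,v} \<times> {0,a})"
        and eq: "(\<lambda>(w,p). w + (\<lambda>(s,t). s + t) p) x = (\<lambda>(w,p). w + (\<lambda>(s,t). s + t) p) y"
      obtain w1 s1 t1 where xx: "x = (w1, (s1, t1))" by (cases x) auto
      obtain w2 s2 t2 where yy: "y = (w2, (s2, t2))" by (cases y) auto
      have h: "w1 \<in> L'" "s1 \<in> {0,v}" "t1 \<in> {0,a}" "w2 \<in> L'" "s2 \<in> {0,v}" "t2 \<in> {0,a}"
        "w1 + (s1 + t1) = w2 + (s2 + t2)" using x y eq xx yy by auto
      have i1: "inj_on (\<lambda>(w,s). w + s) (L1 \<times> {0,a})" using H1(3) by (simp add: bij_betw_def)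
      have i2: "inj_on (\<lambda>(w,s). w + s) (L' \<times> {0,v})" using H2(3) by (simp add: bij_betw_def)
      have m1: "w1 + s1 \<in> L1" "w2 + s2 \<in> L1" using H2(3) h by (auto simp: bij_betw_def)
      have "(\<lambda>(w,s). w + s) (w1 + s1, t1) = (\<lambda>(w,s). w + s) (w2 + s2, t2)"
        using h(7) by (simp add: add.assoc)
      then have "(w1 + s1, t1) = (w2 + s2, t2)" using inj_onD[OF i1] m1 h by blast
      then have e1: "w1 + s1 = w2 + s2" "t1 = t2" by auto
      then have "(w1, s1) = (w2, s2)" using inj_onD[OF i2, of "(w1,s1)" "(w2,s2)"] h by auto
      then show "x = y" using e1 xx yy by auto
    qed
  next
    show "(\<lambda>(w,p). w + (\<lambda>(s,t). s + t) p) ` (L' \<times> ({0,v} \<times> {0,a})) = L"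
    proof
      show "(\<lambda>(w,p). w + (\<lambda>(s,t). s + t) p) ` (L' \<times> ({0,v} \<times> {0,a})) \<subseteq> L"
      proof clarify
        fix w s t assume h: "w \<in> L'" "s \<in> {0,v}" "t \<in> {0,a}"
        have "w + s \<in> L1" using H2(3) h by (auto simp: bij_betw_def)
        then have "(w + s) + t \<in> L" using H1(3) h by (auto simp: bij_betw_def)
        then show "w + (s + t) \<in> L" by (simp add: add.assoc)
      qed
    next
      show "L \<subseteq> (\<lambda>(w,p). w + (\<lambda>(s,t). s + t) p) ` (L' \<times> ({0,v} \<times> {0,a}))"
      proof
        fix w assume "w \<in> L"
        then obtain w' s t where "w' \<in> L'" "s \<in> {0,v}" "t \<in> {0,a}" "w = w' + (s + t)"
          using decomp by blast
        then show "w \<in> (\<lambda>(w,p). w + (\<lambda>(s,t). s + t) p) ` (L' \<times> ({0,v} \<times> {0,a}))"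
          by (intro image_eqI[of _ _ "(w', (s, t))"]) auto
      qed
    qed
  qed
  have RR: "R L' = R L"
  proof (rule radical_same[OF L'L])
    show "R L \<subseteq> L'"
    proof
      fix z assume z: "z \<in> R L"
      then have "b z v \<in> \<int>" "b z a \<in> \<int>" "z \<in> L" using v a by (auto simp: R_def)
      then show "z \<in> L'" using b_Ints_sym by (auto simp: L'_def L1_def)
    qed
  next
    show "\<forall>z\<in>L'. \<forall>w\<in>L. \<exists>w'\<in>L'. b z w \<doteq> b z w'"
    proof (intro ballI)
      fix z w assume z: "z \<in> L'" and w: "w \<in> L"
      obtain w' s t where st: "w' \<in> L'" "s \<in> {0,v}" "t \<in> {0,a}" "w = w' + (s + t)"
        using decomp w by blast
      have "b z w \<doteq> b z w' + b z (s + t)" using st(4) b_addr by simp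
      also have "b z (s + t) \<doteq> b z s + b z t" by (rule b_addr)
      then have "b z (s + t) \<in> \<int>" using orth[OF z, of s] orth[OF z, of t] st zeq_Ints Ints_add by blast
      then have "b z w \<doteq> b z w'" using calculation zeq_drop by blast
      then show "\<exists>w'\<in>L'. b z w \<doteq> b z w'" using st(1) by blast
    qed
  qed
  then show "R {w\<in>L. b v w \<in> \<int> \<and> b a w \<in> \<int>} = R L" using L'eq by simp
  have cond: "\<forall>w\<in>L'. \<forall>p\<in>{0,v} \<times> {0,a}. q (w + (\<lambda>(s,t). s + t) p) \<doteq> q w + q ((\<lambda>(s,t). s + t) p)"
  proof (intro ballI)
    fix w p assume w: "w \<in> L'" and p: "p \<in> {0,v} \<times> {0,a}"
    obtain s t where st: "p = (s,t)" "s \<in> {0,v}" "t \<in> {0,a}" using p by auto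
    have "b w (s + t) \<doteq> b w s + b w t" by (rule b_addr)
    then have bi: "b w (s + t) \<in> \<int>" using orth[OF w, of s] orth[OF w, of t] st zeq_Ints Ints_add by blast
    have "q (w + (s + t)) \<doteq> q w + q (s + t) + b w (s + t)" by (rule q_add)
    then show "q (w + (\<lambda>(s,t). s + t) p) \<doteq> q w + q ((\<lambda>(s,t). s + t) p)"
      using st(1) bi zeq_drop by simp
  qed
  have "S L = S L' * (\<Sum>p\<in>{0,v} \<times> {0,a}. E (q ((\<lambda>(s,t). s + t) p)))"
    by (rule split_S[OF fin' _ bij cond]) simp
  also have "(\<Sum>p\<in>{0,v} \<times> {0,a}. E (q ((\<lambda>(s,t). s + t) p))) = (\<Sum>(s,t)\<in>{0,v} \<times> {0,a}. E (q (s + t)))"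
    by (rule sum.cong) auto
  also have "\<dots> = (\<Sum>s\<in>{0,v}. \<Sum>t\<in>{0,a}. E (q (s + t)))"
    by (rule sum.cartesian_product[symmetric])
  also have "\<dots> = 1 + E (q v) + E (q a) + E (q (v + a))"
    using H1(5) H2(5) E_int[OF q0] by simp
  finally show "S L = S {w\<in>L. b v w \<in> \<int> \<and> b a w \<in> \<int>} * (1 + E (q v) + E (q a) + E (q (v + a)))"
    using L'eq by simp
qed

end

context qf begin

lemma iso_step:
  assumes L: "subgrp L" "finite L" and x: "x \<in> L" "x \<notin> R L" "x + x \<in> R L" "q x \<in> \<int>"
    and qR: "\<forall>z\<in>R L. q z \<in> \<int>"
  shows "subgrp {w\<in>L. b x w \<in> \<int>}" "card L = 2 * card {w\<in>L. b x w \<in> \<int>}"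
    "card (R {w\<in>L. b x w \<in> \<int>}) = 2 * card (R L)" "S L = S {w\<in>L. b x w \<in> \<int>}"
    "\<forall>z\<in>R {w\<in>L. b x w \<in> \<int>}. q z \<in> \<int>"
proof -
  define L' where "L' = {w\<in>L. b x w \<in> \<int>}"
  obtain w0 where w0: "w0 \<in> L" "b x w0 \<notin> \<int>" using x(1,2) by (auto simp: R_def)
  have h2: "\<forall>w\<in>L. 2 * b x w \<in> \<int>" using dbl_R[OF x(3)] by blast
  have hw0: "b x w0 \<doteq> 1/2" using half_zeq h2 w0 by blast
  note H = half_split[OF L w0(1) h2 hw0, folded L'_def]
  show "subgrp {w\<in>L. b x w \<in> \<int>}" "card L = 2 * card {w\<in>L. b x w \<in> \<int>}"
    using H unfolding L'_def by auto
  have L'L: "L' \<subseteq> L" by (auto simp: L'_def)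
  have fin': "finite L'" using L(2) L'L finite_subset by blast
  have RL: "R L \<subseteq> L'"
  proof
    fix z assume "z \<in> R L"
    then have "z \<in> L" "b z x \<in> \<int>" using x(1) by (auto simp: R_def)
    then show "z \<in> L'" using b_Ints_sym[of z x] by (auto simp: L'_def)
  qed
  have "2 * q x \<in> \<int>" using x(4) Ints_mult[of 2 "q x"] by simp
  then have bxx: "b x x \<in> \<int>" using q_diag[of x] zeq_Ints by blast
  have bij_t: "bij_betw (\<lambda>w. w + x) L L"
    by (rule bij_betwI[where g = "\<lambda>w. w - x"]) (use L x(1) in \<open>auto simp: subgrp_add subgrp_diff\<close>)
  have "(\<Sum>w\<in>L. E (q (w + x))) = (\<Sum>w\<in>L. E (q w))"
    by (rule sum.reindex_bij_betw[OF bij_t])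
  then have SL2: "S L = (\<Sum>w\<in>L. E (q (w + x)))" unfolding S_def by simp
  have Ew: "E (q (w + x)) = E (q w) * E (b w x)" for w
  proof -
    have "q (w + x) \<doteq> q w + q x + b w x" by (rule q_add)
    then have "q (w + x) \<doteq> (q w + b w x) + q x" by (simp add: algebra_simps)
    then have "q (w + x) \<doteq> q w + b w x" using x(4) zeq_drop by blast
    then have "E (q (w + x)) = E (q w + b w x)" by (rule zeq_E)
    then show ?thesis by (simp add: E_add)
  qed
  have Eb: "E (q w) + E (q (w + x)) = (if w \<in> L' then 2 * E (q w) else 0)" if w: "w \<in> L" for w
  proof (cases "b x w \<in> \<int>")
    case True
    then have "b w x \<in> \<int>" using b_Ints_sym[of x w] by blast
    then show ?thesis using Ew[of w] E_int True w by (simp add: L'_def)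
  next
    case False
    then have "b x w \<doteq> 1/2" using half_zeq h2 w by blast
    then have "b w x \<doteq> 1/2" using b_sym zeq_trans by blast
    then have "E (b w x) = E (1/2)" by (rule zeq_E)
    then have "E (b w x) = -1" by (simp add: E_half)
    then show ?thesis using Ew[of w] False by (simp add: L'_def)
  qed
  have A: "S L = (\<Sum>w\<in>L. E (q w))" by (simp add: S_def)
  have "2 * S L = S L + S L" by (rule mult_2)
  also have "\<dots> = (\<Sum>w\<in>L. E (q w)) + (\<Sum>w\<in>L. E (q (w + x)))" using A SL2 by metis
  also have "\<dots> = (\<Sum>w\<in>L. E (q w) + E (q (w + x)))" by (rule sum.distrib[symmetric])
  also have "\<dots> = (\<Sum>w\<in>L. if w \<in> L' then 2 * E (q w) else 0)"
    by (rule sum.cong) (auto simp: Eb)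
  also have "\<dots> = (\<Sum>w\<in>L'. 2 * E (q w))"
    unfolding L'_def using sum.inter_filter[OF L(2), of "\<lambda>w. 2 * E (q w)" "\<lambda>w. b x w \<in> \<int>"]
    by (simp add: L'_def)
  also have "\<dots> = 2 * S L'" unfolding S_def by (simp add: sum_distrib_left)
  finally show "S L = S {w\<in>L. b x w \<in> \<int>}" unfolding L'_def by simp
  have w0w0: "w0 + w0 \<in> L'"
  proof -
    have "b x (w0 + w0) \<doteq> 2 * b x w0" by (rule b_dblr)
    also have "\<dots> \<doteq> 2 * (1/2)" using hw0 by (intro zeq_mult) auto
    finally have "b x (w0 + w0) \<in> \<int>" using zeq_Ints by simp
    then show ?thesis using w0 L by (auto simp: L'_def subgrp_add)
  qed
  have RLeq: "R L' = R L \<union> (\<lambda>z. z + x) ` R L"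
  proof
    show "R L \<union> (\<lambda>z. z + x) ` R L \<subseteq> R L'"
    proof
      fix y assume "y \<in> R L \<union> (\<lambda>z. z + x) ` R L"
      then show "y \<in> R L'"
      proof
        assume "y \<in> R L" then show ?thesis using RL L'L by (auto simp: R_def)
      next
        assume "y \<in> (\<lambda>z. z + x) ` R L"
        then obtain z where z: "z \<in> R L" "y = z + x" by auto
        have zL: "z \<in> L" using z by (auto simp: R_def)
        have bzx: "b z x \<in> \<int>" using z x(1) by (auto simp: R_def)
        have "b x (z + x) \<doteq> b x z + b x x" by (rule b_addr)
        moreover have "b x z + b x x \<in> \<int>" using b_Ints_sym[OF bzx] bxx Ints_add by blast
        ultimately have "b x (z + x) \<in> \<int>" using zeq_Ints by blast
        then have yL': "y \<in> L'" using z zL x(1) L by (auto simp: L'_def subgrp_add)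
        have "b y w \<in> \<int>" if w: "w \<in> L'" for w
        proof -
          have "b (z + x) w \<doteq> b z w + b x w" by (rule b_addl)
          moreover have "b z w + b x w \<in> \<int>" using z w L'L by (auto simp: R_def L'_def)
          ultimately show ?thesis using zeq_Ints z by blast
        qed
        then show ?thesis using yL' by (auto simp: R_def)
      qed
    qed
  next
    show "R L' \<subseteq> R L \<union> (\<lambda>z. z + x) ` R L"
    proof
      fix z assume z: "z \<in> R L'"
      then have zL': "z \<in> L'" by (auto simp: R_def)
      then have zL: "z \<in> L" using L'L by blast
      have bz: "b z w \<in> \<int>" if "w \<in> L'" for w using z that by (auto simp: R_def)
      show "z \<in> R L \<union> (\<lambda>z. z + x) ` R L"
      proof (cases "b z w0 \<in> \<int>")
        case True
        have "b z w \<in> \<int>" if w: "w \<in> L" for w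
        proof (cases "w \<in> L'")
          case True then show ?thesis using bz by blast
        next
          case False
          then have "w - w0 \<in> L'" using H(2) w by blast
          then have "b z (w - w0) + b z w0 \<in> \<int>" using bz \<open>b z w0 \<in> \<int>\<close> Ints_add by blast
          then show ?thesis using b_split[of z w w0] zeq_Ints by blast
        qed
        then have "z \<in> R L" using zL by (auto simp: R_def)
        then show ?thesis by blast
      next
        case False
        have "b z (w0 + w0) \<doteq> 2 * b z w0" by (rule b_dblr)
        then have "2 * b z w0 \<in> \<int>" using bz[OF w0w0] zeq_Ints zeq_sym by blast
        then have hz: "b z w0 \<doteq> 1/2" using half_zeq False by blast
        have "b (z - x) w \<in> \<int>" if w: "w \<in> L" for w
        proof -
          have d: "b (z - x) w \<doteq> b z w - b x w" by (rule b_diffl)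
          show ?thesis
          proof (cases "w \<in> L'")
            case True
            then have "b z w - b x w \<in> \<int>" using bz by (auto simp: L'_def)
            then show ?thesis using d zeq_Ints by blast
          next
            case False
            then have ww: "w - w0 \<in> L'" using H(2) w by blast
            have "b z w \<doteq> b z (w - w0) + b z w0" by (rule b_split)
            also have "\<dots> \<doteq> 0 + 1/2" using bz[OF ww] hz by (intro zeq_add Ints_zeq0)
            finally have e1: "b z w \<doteq> 1/2" by simp
            have "b x w \<doteq> b x (w - w0) + b x w0" by (rule b_split)
            also have "\<dots> \<doteq> 0 + 1/2" using ww hw0 by (intro zeq_add Ints_zeq0) (auto simp: L'_def)
            finally have e2: "b x w \<doteq> 1/2" by simp
            have "b z w - b x w \<doteq> 1/2 - 1/2" using e1 e2 by (rule zeq_diff)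
            then have "b z w - b x w \<in> \<int>" using zeq0_Ints by simp
            then show ?thesis using d zeq_Ints by blast
          qed
        qed
        then have "z - x \<in> R L" using zL x(1) L by (auto simp: R_def subgrp_diff)
        then show ?thesis by (intro UnI2 image_eqI[of _ _ "z - x"]) auto
      qed
    qed
  qed
  have finR: "finite (R L)" using L(2) R_sub finite_subset by blast
  have disj: "R L \<inter> (\<lambda>z. z + x) ` R L = {}"
  proof (rule ccontr)
    assume "R L \<inter> (\<lambda>z. z + x) ` R L \<noteq> {}"
    then obtain z where z: "z \<in> R L" "z + x \<in> R L" by auto
    then have "(z + x) - z \<in> R L" using R_diff L(1) by blast
    then show False using x(2) by simp
  qed
  have "card (R L') = card (R L) + card ((\<lambda>z. z + x) ` R L)"
    unfolding RLeq by (rule card_Un_disjoint[OF finR _ disj]) (use finR in auto)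
  also have "card ((\<lambda>z. z + x) ` R L) = card (R L)"
    by (rule card_image) (auto simp: inj_on_def)
  finally show "card (R {w\<in>L. b x w \<in> \<int>}) = 2 * card (R L)" unfolding L'_def by simp
  show "\<forall>z\<in>R {w\<in>L. b x w \<in> \<int>}. q z \<in> \<int>"
  proof
    fix y assume "y \<in> R {w\<in>L. b x w \<in> \<int>}"
    then have "y \<in> R L \<union> (\<lambda>z. z + x) ` R L" using RLeq unfolding L'_def by simp
    then show "q y \<in> \<int>"
    proof
      assume "y \<in> R L" then show ?thesis using qR by blast
    next
      assume "y \<in> (\<lambda>z. z + x) ` R L"
      then obtain z where z: "z \<in> R L" "y = z + x" by auto
      have "q (z + x) \<doteq> q z + q x + b z x" by (rule q_add)
      moreover have "q z + q x + b z x \<in> \<int>" using qR z x by (auto simp: R_def)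
      ultimately show ?thesis using z zeq_Ints by blast
    qed
  qed
qed

end

context qf begin

lemma exp2_R:
  assumes L: "subgrp L" and C1: "\<not> (\<exists>x\<in>L. x \<notin> R L \<and> x + x \<in> R L \<and> q x \<in> \<int>)"
    and C3: "\<not> (\<exists>y\<in>L. y + y + y + y \<in> R L \<and> 2 * b y y \<notin> \<int>)"
    and tor: "\<forall>y\<in>L. \<exists>n. p2 n y = 0"
  shows "\<forall>w\<in>L. w + w \<in> R L"
proof -
  have ex4: "w + w \<in> R L" if w: "w \<in> L" and w4: "w + w + w + w \<in> R L" for w
  proof (rule ccontr)
    assume nz: "w + w \<notin> R L"
    have "2 * b w w \<in> \<int>" using C3 w w4 by blast
    have "q (w + w) \<doteq> 4 * q w" by (rule q_dbl)
    also have "4 * q w = 2 * (2 * q w)" by simp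
    also have "2 * (2 * q w) \<doteq> 2 * b w w" by (rule zeq_mult) (simp, rule zeq_sym[OF q_diag])
    finally have "q (w + w) \<in> \<int>" using \<open>2 * b w w \<in> \<int>\<close> zeq_Ints by blast
    moreover have "(w + w) + (w + w) \<in> R L" using w4 by (simp add: add.assoc)
    moreover have "w + w \<in> L" using L w by (simp add: subgrp_add)
    ultimately show False using C1 nz by blast
  qed
  have ind: "\<forall>w\<in>L. p2 (Suc n) w \<in> R L \<longrightarrow> w + w \<in> R L" for n
  proof (induction n)
    case 0 then show ?case by simp
  next
    case (Suc n)
    show ?case
    proof (intro ballI impI)
      fix w assume w: "w \<in> L" and h: "p2 (Suc (Suc n)) w \<in> R L"
      define u where "u = p2 n w"
      have uL: "u \<in> L" using subgrp_p2[OF L w] by (simp add: u_def)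
      have "u + u + u + u \<in> R L" using h by (simp add: u_def add.assoc)
      then have "u + u \<in> R L" using ex4 uL by blast
      then have "p2 (Suc n) w \<in> R L" by (simp add: u_def)
      then show "w + w \<in> R L" using Suc w by blast
    qed
  qed
  show ?thesis
  proof
    fix w assume w: "w \<in> L"
    obtain n where n: "p2 n w = 0" using tor w by blast
    show "w + w \<in> R L"
    proof (cases n)
      case 0 then show ?thesis using n R_0[OF L] by simp
    next
      case (Suc m) then show ?thesis using ind[of m] n R_0[OF L] w by auto
    qed
  qed
qed

theorem gauss_main:
  assumes "subgrp L" "finite L" "\<forall>y\<in>L. \<exists>n. p2 n y = 0" "\<forall>z\<in>R L. q z \<in> \<int>"
  shows "\<exists>\<zeta>. \<zeta>^8 = 1 \<and> S L = \<zeta> * complex_of_real (sqrt (real (card L * card (R L))))"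
  using assms
proof (induction "card L" arbitrary: L rule: less_induct)
  case less
  note L = less.prems(1,2) and tor = less.prems(3) and qR = less.prems(4)
  have RsubL: "R L \<subseteq> L" by (rule R_sub)
  have subIH: "\<exists>\<zeta>. \<zeta>^8 = 1 \<and> S L' = \<zeta> * complex_of_real (sqrt (real (card L' * card (R L'))))"
    if "L' \<subseteq> L" "subgrp L'" "card L = m * card L'" "m \<ge> 2" "\<forall>z\<in>R L'. q z \<in> \<int>" for L' m
  proof -
    have fin: "finite L'" using that(1) L(2) finite_subset by blast
    have "card L' > 0" using fin that(2) subgrp_0 card_gt_0_iff by blast
    then have "card L' < card L" using that(3,4) by (simp add: less_le_trans[of _ "2 * card L'"])
    then show ?thesis using less.hyps[of L'] that fin tor by blast
  qed
  show ?case
  proof (cases "L \<subseteq> R L")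
    case True
    then have RL: "R L = L" using RsubL by blast
    have "S L = (\<Sum>w\<in>L. 1)" unfolding S_def using qR RL E_int by (intro sum.cong) auto
    then have "S L = of_nat (card L)" by simp
    moreover have "sqrt (real (card L * card L)) = real (card L)"
      by (simp add: real_sqrt_mult)
    ultimately show ?thesis using RL by (intro exI[of _ 1]) simp
  next
    case nontriv: False
    show ?thesis
    proof (cases "\<exists>x\<in>L. x \<notin> R L \<and> x + x \<in> R L \<and> q x \<in> \<int>")
      case True
      then obtain x where x: "x \<in> L" "x \<notin> R L" "x + x \<in> R L" "q x \<in> \<int>" by blast
      define L' where "L' = {w\<in>L. b x w \<in> \<int>}"
      note H = iso_step[OF L x qR, folded L'_def]
      obtain \<zeta> where z: "\<zeta>^8 = 1" "S L' = \<zeta> * complex_of_real (sqrt (real (card L' * card (R L'))))"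
        using subIH[of L' 2] H by (auto simp: L'_def)
      have "card L' * card (R L') = card L * card (R L)" using H(2,3) by simp
      then show ?thesis using z H(4) by (intro exI[of _ \<zeta>]) simp
    next
      case C1: False
      show ?thesis
      proof (cases "\<exists>x\<in>L. x \<notin> R L \<and> x + x \<in> R L \<and> b x x \<notin> \<int>")
        case True
        then obtain x where x: "x \<in> L" "x \<notin> R L" "x + x \<in> R L" "b x x \<notin> \<int>" by blast
        have h2: "\<forall>w\<in>L. 2 * b x w \<in> \<int>" using dbl_R[OF x(3)] by blast
        have hxx: "b x x \<doteq> 1/2" using half_zeq h2 x by blast
        define L' where "L' = {w\<in>L. b x w \<in> \<int>}"
        note H = half_split[OF L x(1) h2 hxx, folded L'_def]
        have L'L: "L' \<subseteq> L" by (auto simp: L'_def)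
        have fin': "finite L'" using L(2) L'L finite_subset by blast
        have RR: "R L' = R L"
        proof (rule radical_same[OF L'L])
          show "R L \<subseteq> L'"
          proof
            fix z assume z: "z \<in> R L"
            then have "z \<in> L" "b z x \<in> \<int>" using x(1) by (auto simp: R_def)
            then show "z \<in> L'" using b_Ints_sym[of z x] by (auto simp: L'_def)
          qed
        next
          show "\<forall>z\<in>L'. \<forall>w\<in>L. \<exists>w'\<in>L'. b z w \<doteq> b z w'"
          proof (intro ballI)
            fix z w assume z: "z \<in> L'" and w: "w \<in> L"
            show "\<exists>w'\<in>L'. b z w \<doteq> b z w'"
            proof (cases "w \<in> L'")
              case True then show ?thesis by (intro bexI[of _ w]) simp_all
            next
              case False
              then have ww: "w - x \<in> L'" using H(2) w by blast
              have "b z x \<in> \<int>" using z b_Ints_sym[of x z] by (auto simp: L'_def)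
              then have "b z w \<doteq> b z (w - x)" using b_split[of z w x] zeq_drop by blast
              then show ?thesis using ww by blast
            qed
          qed
        qed
        have cond: "\<forall>w\<in>L'. \<forall>p\<in>{0,x}. q (w + id p) \<doteq> q w + q (id p)"
        proof (intro ballI)
          fix w p assume w: "w \<in> L'" and p: "p \<in> {0,x}"
          have "b p w \<in> \<int>" using p w b_0l by (auto simp: L'_def)
          then have bi: "b w p \<in> \<int>" using b_Ints_sym by blast
          have "q (w + p) \<doteq> q w + q p + b w p" by (rule q_add)
          then show "q (w + id p) \<doteq> q w + q (id p)" using bi zeq_drop by simp
        qed
        have bij: "bij_betw (\<lambda>(w,p). w + id p) (L' \<times> {0,x}) L" using H(3) by simp
        have "S L = S L' * (\<Sum>p\<in>{0,x}. E (q (id p)))"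
          by (rule split_S[OF fin' _ bij cond]) simp
        also have "(\<Sum>p\<in>{0,x}. E (q (id p))) = 1 + E (q x)"
          using H(5) E_int[OF q0] by simp
        finally have SL: "S L = S L' * (1 + E (q x))" .
        obtain \<zeta> where z: "\<zeta>^8 = 1" "S L' = \<zeta> * complex_of_real (sqrt (real (card L' * card (R L'))))"
          using subIH[of L' 2] H(1,4) RR qR L'L by auto
        define d where "d = (1 + E (q x)) / complex_of_real (sqrt 2)"
        have "2 * q x \<doteq> 1/2" using q_diag[of x] hxx zeq_sym zeq_trans by blast
        then have "2 * (q x - 1/4) \<in> \<int>" unfolding zeq_def by (simp add: algebra_simps)
        then have "q x - 1/4 \<in> \<int> \<or> q x - 1/4 \<doteq> 1/2" using half_zeq by blast
        then have "E (q x) = \<i> \<or> E (q x) = - \<i>"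
        proof
          assume "q x - 1/4 \<in> \<int>"
          then have "E (q x) = E (1/4)" by (rule E_cong)
          then show ?thesis by (simp add: E_quarter)
        next
          assume "q x - 1/4 \<doteq> 1/2"
          then have "q x - 3/4 \<in> \<int>" unfolding zeq_def by (simp add: algebra_simps)
          then have "E (q x) = E (3/4)" by (rule E_cong)
          then show ?thesis by (simp add: E_3quarter)
        qed
        then have d8: "d ^ 8 = 1" unfolding d_def using root8_a root8_b by auto
        have "1 + E (q x) = complex_of_real (sqrt (real 2)) * d" unfolding d_def by simp
        then have "S L = (\<zeta> * d) * complex_of_real (sqrt (real (card L * card (R L))))"
          using finish[OF SL z(2) H(4)] RR by simp
        moreover have "(\<zeta> * d) ^ 8 = 1" using z(1) d8 by (simp add: power_mult_distrib)
        ultimately show ?thesis by blast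
      next
        case C2: False
        have sqrt4: "sqrt (real 4) = 2" by (rule real_sqrt_unique) auto
        show ?thesis
        proof (cases "\<exists>y\<in>L. y + y + y + y \<in> R L \<and> 2 * b y y \<notin> \<int>")
          case True
          then obtain y where y: "y \<in> L" "y + y + y + y \<in> R L" "2 * b y y \<notin> \<int>" by blast
          define v where "v = y + y"
          have vL: "v \<in> L" using L y by (simp add: v_def subgrp_add)
          have vv: "v + v \<in> R L" using y(2) by (simp add: v_def add.assoc)
          have hv: "\<forall>w\<in>L. 2 * b v w \<in> \<int>" using dbl_R[OF vv] by blast
          have bvy: "b v y \<doteq> 2 * b y y" unfolding v_def by (rule b_dbll)
          have "2 * b v y \<in> \<int>" using hv y(1) by blast
          moreover have "2 * b v y \<doteq> 2 * (2 * b y y)" using bvy by (intro zeq_mult) auto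
          ultimately have "2 * (2 * b y y) \<in> \<int>" using zeq_Ints zeq_sym by blast
          then have h2yy: "2 * b y y \<doteq> 1/2" using half_zeq y(3) by blast
          have hva: "b v y \<doteq> 1/2" using bvy h2yy zeq_trans by blast
          have ha: "\<forall>w\<in>L. b v w \<in> \<int> \<longrightarrow> 2 * b y w \<in> \<int>"
          proof (intro ballI impI)
            fix w assume "w \<in> L" "b v w \<in> \<int>"
            moreover have "b v w \<doteq> 2 * b y w" unfolding v_def by (rule b_dbll)
            ultimately show "2 * b y w \<in> \<int>" using zeq_Ints zeq_sym by blast
          qed
          have hav: "b y v \<doteq> 1/2" using b_sym[of y v] hva zeq_trans by blast
          have "b v v \<doteq> 2 * b v y" unfolding v_def by (rule b_dblr)
          also have "\<dots> \<doteq> 2 * (1/2)" using hva by (intro zeq_mult) auto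
          finally have hvv: "b v v \<in> \<int>" using zeq_Ints by simp
          note D = double_split[OF L vL y(1) hv hva ha hav hvv]
          define L' where "L' = {w\<in>L. b v w \<in> \<int> \<and> b y w \<in> \<int>}"
          have L'L: "L' \<subseteq> L" by (auto simp: L'_def)
          obtain \<zeta> where z: "\<zeta>^8 = 1" "S L' = \<zeta> * complex_of_real (sqrt (real (card L' * card (R L'))))"
            using subIH[of L' 4] D(1,2,3) qR L'L unfolding L'_def by auto
          have "4 * q y = 2 * (2 * q y)" by simp
          also have "2 * (2 * q y) \<doteq> 2 * b y y" by (rule zeq_mult) (simp, rule zeq_sym[OF q_diag])
          also have "2 * b y y \<doteq> 1/2" by (rule h2yy)
          finally have q4: "4 * q y \<doteq> 1/2" .
          have "q v \<doteq> 4 * q y" unfolding v_def by (rule q_dbl)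
          then have qv: "q v \<doteq> 1/2" using q4 zeq_trans by blast
          then have "E (q v) = E (1/2)" by (rule zeq_E)
          then have Eqv: "E (q v) = -1" by (simp add: E_half)
          have "q (v + y) \<doteq> q v + q y + b v y" by (rule q_add)
          then have "E (q (v + y)) = E (q v + q y + b v y)" by (rule zeq_E)
          then have "E (q (v + y)) = E (q v) * E (q y) * E (b v y)" by (simp add: E_add)
          moreover have "E (b v y) = E (1/2)" using hva by (rule zeq_E)
          ultimately have Evy: "E (q (v + y)) = E (q y)" using Eqv by (simp add: E_half)
          have SL: "S L = S L' * (2 * E (q y))" using D(4) Eqv Evy unfolding L'_def by simp
          have ceq: "2 * E (q y) = complex_of_real (sqrt (real 4)) * E (q y)" using sqrt4 by simp
          have "S L = (\<zeta> * E (q y)) * complex_of_real (sqrt (real (card L * card (R L'))))"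
            by (rule finish[OF SL z(2) D(2)[folded L'_def] ceq])
          then have "S L = (\<zeta> * E (q y)) * complex_of_real (sqrt (real (card L * card (R L))))"
            using D(3)[folded L'_def] by simp
          moreover have "E (q y) ^ 8 = 1"
          proof -
            have "8 * q y = 2 * (4 * q y)" by simp
            also have "\<dots> \<doteq> 2 * (1/2)" using q4 by (intro zeq_mult) auto
            finally have "8 * q y \<in> \<int>" using zeq_Ints by simp
            then show ?thesis using E_pow[of "q y" 8] E_int by simp
          qed
          then have "(\<zeta> * E (q y)) ^ 8 = 1" using z(1) by (simp add: power_mult_distrib)
          ultimately show ?thesis by blast
        next
          case C3: False
          have all2: "\<forall>w\<in>L. w + w \<in> R L" using exp2_R[OF L(1) C1 C3 tor] .
          obtain x where x: "x \<in> L" "x \<notin> R L" using nontriv by blast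
          have xx: "x + x \<in> R L" using all2 x by blast
          have qx: "q x \<notin> \<int>" using C1 x xx by blast
          have bxx: "b x x \<in> \<int>" using C2 x xx by blast
          have "2 * q x \<in> \<int>" using q_diag[of x] bxx zeq_Ints zeq_sym by blast
          then have qx2: "q x \<doteq> 1/2" using half_zeq qx by blast
          obtain y where y: "y \<in> L" "b x y \<notin> \<int>" using x by (auto simp: R_def)
          have hxy: "b x y \<doteq> 1/2" using half_zeq dbl_R[OF xx y(1)] y(2) by blast
          have yR: "y \<notin> R L"
          proof
            assume "y \<in> R L"
            then have "b y x \<in> \<int>" using x(1) by (auto simp: R_def)
            then show False using b_Ints_sym[of y x] y(2) by blast
          qed
          have yy: "y + y \<in> R L" using all2 y by blast
          have qy: "q y \<notin> \<int>" using C1 y yR yy by blast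
          have byy: "b y y \<in> \<int>" using C2 y yR yy by blast
          have "2 * q y \<in> \<int>" using q_diag[of y] byy zeq_Ints zeq_sym by blast
          then have qy2: "q y \<doteq> 1/2" using half_zeq qy by blast
          have hv: "\<forall>w\<in>L. 2 * b x w \<in> \<int>" using dbl_R[OF xx] by blast
          have ha: "\<forall>w\<in>L. b x w \<in> \<int> \<longrightarrow> 2 * b y w \<in> \<int>" using dbl_R[OF yy] by blast
          have hav: "b y x \<doteq> 1/2" using b_sym[of y x] hxy zeq_trans by blast
          note D = double_split[OF L x(1) y(1) hv hxy ha hav bxx]
          define L' where "L' = {w\<in>L. b x w \<in> \<int> \<and> b y w \<in> \<int>}"
          have L'L: "L' \<subseteq> L" by (auto simp: L'_def)
          obtain \<zeta> where z: "\<zeta>^8 = 1" "S L' = \<zeta> * complex_of_real (sqrt (real (card L' * card (R L'))))"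
            using subIH[of L' 4] D(1,2,3) qR L'L unfolding L'_def by auto
          have "E (q x) = E (1/2)" using qx2 by (rule zeq_E)
          then have Ex: "E (q x) = -1" by (simp add: E_half)
          have "E (q y) = E (1/2)" using qy2 by (rule zeq_E)
          then have Ey: "E (q y) = -1" by (simp add: E_half)
          have "E (b x y) = E (1/2)" using hxy by (rule zeq_E)
          then have Eb: "E (b x y) = -1" by (simp add: E_half)
          have "q (x + y) \<doteq> q x + q y + b x y" by (rule q_add)
          then have "E (q (x + y)) = E (q x + q y + b x y)" by (rule zeq_E)
          then have "E (q (x + y)) = E (q x) * E (q y) * E (b x y)" by (simp add: E_add)
          then have Exy: "E (q (x + y)) = -1" using Ex Ey Eb by simp
          have SL: "S L = S L' * (-2)" using D(4) Ex Ey Exy unfolding L'_def by simp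
          have ceq: "(-2::complex) = complex_of_real (sqrt (real 4)) * (-1)" using sqrt4 by simp
          have "S L = (\<zeta> * (-1)) * complex_of_real (sqrt (real (card L * card (R L'))))"
            by (rule finish[OF SL z(2) D(2)[folded L'_def] ceq])
          then have "S L = (\<zeta> * (-1)) * complex_of_real (sqrt (real (card L * card (R L))))"
            using D(3)[folded L'_def] by simp
          moreover have "(\<zeta> * (-1)) ^ 8 = 1" using z(1) by (simp add: power_mult_distrib)
          ultimately show ?thesis by blast
        qed
      qed
    qed
  qed
qed

end

lemma nmul_0[simp]: "nmul 0 x = 0" by (simp add: nmul_def)
lemma nmul_Suc: "nmul (Suc n) x = nmul n x + x" by (simp add: nmul_def)
lemma nmul_add_n: "nmul (m + n) x = nmul m x + nmul n x"
  by (induction n) (simp_all add: nmul_Suc add.assoc)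
lemma nmul_mult: "nmul (m * n) x = nmul m (nmul n x)"
  by (induction m) (simp_all add: nmul_Suc nmul_add_n add.commute)
lemma nmul_zero[simp]: "nmul n 0 = 0" by (simp add: nmul_def)
lemma nmul_plus: "nmul n (x + y) = nmul n x + nmul n y" by (simp add: nmul_def sum.distrib)
lemma nmul_neg: "nmul n (-x) = - nmul n x" by (simp add: nmul_def sum_negf)
lemma nmul_diff: "nmul n (x - y) = nmul n x - nmul n y"
  using nmul_plus[of n x "-y"] nmul_neg[of n y] by simp
lemma p2_nmul: "p2 n x = nmul (2^n) x"
proof (induction n)
  case 0 then show ?case by (simp add: nmul_def)
next
  case (Suc n)
  have "(2::nat)^Suc n = 2^n + 2^n" by simp
  then have "nmul (2^Suc n) x = nmul (2^n + 2^n) x" by metis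
  also have "\<dots> = nmul (2^n) x + nmul (2^n) x" by (rule nmul_add_n)
  finally show ?case using Suc by simp
qed

lemma nmul_pair: "nmul n (x, y) = (nmul n x, nmul n y)"
  by (induction n) (simp_all add: nmul_Suc zero_prod_def)

lemma lp_add1: "linking_pairing lam \<Longrightarrow> lam (x+y) z - lam x z - lam y z \<in> \<int>"
  by (simp add: linking_pairing_def)
lemma lp_add2: "linking_pairing lam \<Longrightarrow> lam x (y+z) - lam x y - lam x z \<in> \<int>"
  by (simp add: linking_pairing_def)
lemma lp_sym: "linking_pairing lam \<Longrightarrow> lam x y - lam y x \<in> \<int>"
  by (simp add: linking_pairing_def)
lemma lp_ns: "linking_pairing lam \<Longrightarrow> (\<forall>y. lam x y \<in> \<int>) \<Longrightarrow> x = 0"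
  by (simp add: linking_pairing_def)
lemma lp_0: assumes "linking_pairing lam" shows "lam 0 z \<in> \<int>"
proof -
  have "lam (0+0) z - lam 0 z - lam 0 z \<in> \<int>" by (rule lp_add1[OF assms])
  then have "- lam 0 z \<in> \<int>" by simp
  then show ?thesis using Ints_minus[of "- lam 0 z"] by simp
qed
lemma lp_nmul: assumes "linking_pairing lam" shows "lam (nmul n z) w - of_nat n * lam z w \<in> \<int>"
proof (induction n)
  case 0 then show ?case using lp_0[OF assms] by simp
next
  case (Suc n)
  have "lam (nmul n z + z) w - lam (nmul n z) w - lam z w \<in> \<int>" by (rule lp_add1[OF assms])
  then have "(lam (nmul n z + z) w - lam (nmul n z) w - lam z w) + (lam (nmul n z) w - of_nat n * lam z w) \<in> \<int>"
    using Suc Ints_add by blast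
  then show ?case by (simp add: nmul_Suc algebra_simps)
qed

lemma two_pow_Ints: "(2::rat) ^ n \<in> \<int>" by (induction n) simp_all

lemma qf_inst:
  assumes lp: "linking_pairing lam" and k: "k \<ge> 1"
  shows "qf (\<lambda>x. 2^(k-1) * lam x x) (\<lambda>x y. 2^k * lam x y)"
proof -
  obtain j where j: "k = Suc j" using k by (cases k) auto
  show ?thesis
  proof
    fix x y z
    have "2^k * (lam (x+y) z - lam x z - lam y z) \<in> \<int>" using two_pow_Ints lp_add1[OF lp] Ints_mult by blast
    then show "2^k * lam (x+y) z - 2^k * lam x z - 2^k * lam y z \<in> \<int>" by (simp add: algebra_simps)
  next
    fix x y
    have "2^k * (lam x y - lam y x) \<in> \<int>" using two_pow_Ints lp_sym[OF lp] Ints_mult by blast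
    then show "2^k * lam x y - 2^k * lam y x \<in> \<int>" by (simp add: algebra_simps)
  next
    fix x y
    define A where "A = lam (x+y) (x+y) - lam x (x+y) - lam y (x+y)"
    define B where "B = lam x (x+y) - lam x x - lam x y"
    define C where "C = lam y (x+y) - lam y x - lam y y"
    define D where "D = lam y x - lam x y"
    have "A \<in> \<int>" "B \<in> \<int>" "C \<in> \<int>" "D \<in> \<int>"
      unfolding A_def B_def C_def D_def using lp_add1[OF lp] lp_add2[OF lp] lp_sym[OF lp] by auto
    then have "2^j * (A + B + C + D) \<in> \<int>" using two_pow_Ints Ints_add Ints_mult by metis
    moreover have "2^j * (A + B + C + D) = 2^(k-1) * lam (x+y) (x+y) - 2^(k-1) * lam x x - 2^(k-1) * lam y y - 2^k * lam x y"
      unfolding A_def B_def C_def D_def j by (simp add: algebra_simps)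
    ultimately show "2^(k-1) * lam (x+y) (x+y) - 2^(k-1) * lam x x - 2^(k-1) * lam y y - 2^k * lam x y \<in> \<int>" by simp
  next
    fix x
    show "2^k * lam x x - 2 * (2^(k-1) * lam x x) \<in> \<int>" unfolding j by simp
  next
    show "2^(k-1) * lam 0 0 \<in> \<int>" using two_pow_Ints lp_0[OF lp] Ints_mult by blast
  qed
qed

lemma RG:
  fixes lam :: "'a::{finite,ab_group_add} \<Rightarrow> 'a \<Rightarrow> rat"
  assumes lp: "linking_pairing lam" and k: "k \<ge> 1"
  shows "qf.R (\<lambda>x y. 2^k * lam x y) (UNIV::'a set) = Gk k"
proof -
  interpret Q: qf "\<lambda>x. 2^(k-1) * lam x x" "\<lambda>x y. 2^k * lam x y" by (rule qf_inst[OF lp k])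
  have "(\<forall>w. 2^k * lam z w \<in> \<int>) \<longleftrightarrow> nmul (2^k) z = 0" for z
  proof
    assume h: "\<forall>w. 2^k * lam z w \<in> \<int>"
    have "lam (nmul (2^k) z) w \<in> \<int>" for w
    proof -
      have "lam (nmul (2^k) z) w - of_nat (2^k) * lam z w \<in> \<int>" by (rule lp_nmul[OF lp])
      then have "(lam (nmul (2^k) z) w - 2^k * lam z w) + 2^k * lam z w \<in> \<int>" using h Ints_add by simp
      then show ?thesis by simp
    qed
    then show "nmul (2^k) z = 0" using lp_ns[OF lp] by blast
  next
    assume h: "nmul (2^k) z = 0"
    show "\<forall>w. 2^k * lam z w \<in> \<int>"
    proof
      fix w
      have "lam (nmul (2^k) z) w - of_nat (2^k) * lam z w \<in> \<int>" by (rule lp_nmul[OF lp])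
      then have "lam 0 w - 2^k * lam z w \<in> \<int>" using h by simp
      then have "lam 0 w - (lam 0 w - 2^k * lam z w) \<in> \<int>" using lp_0[OF lp] Ints_diff by blast
      then show "2^k * lam z w \<in> \<int>" by simp
    qed
  qed
  then show ?thesis unfolding Q.R_def Gk_def by auto
qed

lemma qvanish:
  fixes lam :: "'a::{finite,ab_group_add} \<Rightarrow> 'a \<Rightarrow> rat"
  assumes k: "k \<ge> 1" and alt: "bk_alternating lam k" and z: "z \<in> Gk k"
  shows "2^(k-1) * lam z z \<in> \<int>"
proof -
  define N where "N = {a + nmul 2 b | a b. (a::'a) \<in> Gk (k - 1) \<and> b \<in> Gk (k + 1)}"
  have "0 \<in> N" unfolding N_def Gk_def by (rule CollectI, rule exI[of _ 0], rule exI[of _ 0]) simp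
  then have zX: "z \<in> (\<lambda>y. z + y) ` N" by (intro image_eqI[of _ _ 0]) auto
  have "(\<lambda>y. z + y) ` N \<in> Pk k" unfolding Pk_def N_def using z by blast
  then have "bk lam k z z = 0" using alt zX unfolding bk_alternating_def by blast
  then have e: "2^k * lam z z = 2 * of_int \<lfloor>2^k * lam z z / 2\<rfloor>" unfolding bk_def by simp
  obtain j where j: "k = Suc j" using k by (cases k) auto
  have "2^(k-1) * lam z z = (2^k * lam z z) / 2" unfolding j by simp
  also have "\<dots> = of_int \<lfloor>2^k * lam z z / 2\<rfloor>" using e by simp
  finally show ?thesis by simp
qed


lemma gamma_formula:
  fixes lam :: "'a::{finite,ab_group_add} \<Rightarrow> 'a \<Rightarrow> rat"
  assumes lp: "linking_pairing lam" and tor: "\<forall>y::'a. \<exists>n. p2 n y = 0" and k: "k \<ge> 1"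
    and alt: "bk_alternating lam k"
  shows "gammak lam k ^ 8 = 1"
    and "gammak lam k = (\<Sum>x\<in>UNIV. E (2^(k-1) * lam x x)) /
           complex_of_real (sqrt (real (card (UNIV::'a set) * card (Gk k :: 'a set))))"
proof -
  interpret Q: qf "\<lambda>x. 2^(k-1) * lam x x" "\<lambda>x y. 2^k * lam x y" by (rule qf_inst[OF lp k])
  have RG': "Q.R UNIV = Gk k" by (rule RG[OF lp k])
  have sg: "subgrp (UNIV::'a set)" by (simp add: subgrp_def)
  have finU: "finite (UNIV::'a set)" by simp
  have torU: "\<forall>y\<in>(UNIV::'a set). \<exists>n. p2 n y = 0" using tor by simp
  have qR: "\<forall>z\<in>Q.R UNIV. 2^(k-1) * lam z z \<in> \<int>" using qvanish[OF k alt] RG' by blast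
  obtain \<zeta> where z: "\<zeta>^8 = 1"
    "Q.S UNIV = \<zeta> * complex_of_real (sqrt (real (card (UNIV::'a set) * card (Q.R UNIV))))"
    using Q.gauss_main[OF sg finU torU qR] by blast
  define G where "G = (Gk k :: 'a set)"
  define C where "C = (\<lambda>x::'a. (\<lambda>y. x + y) ` G)"
  have HkC: "Hk k = range C" unfolding Hk_def C_def G_def by simp
  have Gdiff: "a - b \<in> G" if "a \<in> G" "b \<in> G" for a b
    using that unfolding G_def Gk_def by (simp add: nmul_diff)
  have Gadd: "a + b \<in> G" if "a \<in> G" "b \<in> G" for a b
    using that unfolding G_def Gk_def by (simp add: nmul_plus)
  have G0: "0 \<in> G" unfolding G_def Gk_def by simp
  have Cmem: "z \<in> C x \<longleftrightarrow> z - x \<in> G" for z x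
  proof
    assume "z \<in> C x" then obtain g where "g \<in> G" "z = x + g" unfolding C_def by blast
    then show "z - x \<in> G" by simp
  next
    assume "z - x \<in> G" then show "z \<in> C x" unfolding C_def by (intro image_eqI[of _ _ "z - x"]) auto
  qed
  have xC: "x \<in> C x" for x using Cmem G0 by simp
  have Ceq: "C z = C x" if "z \<in> C x" for z x
  proof -
    have zx: "z - x \<in> G" using that Cmem by blast
    have "w - z \<in> G \<longleftrightarrow> w - x \<in> G" for w
    proof
      assume "w - z \<in> G" then have "(w - z) + (z - x) \<in> G" using zx Gadd by blast
      then show "w - x \<in> G" by simp
    next
      assume "w - x \<in> G" then have "(w - x) - (z - x) \<in> G" using zx Gdiff by blast
      then show "w - z \<in> G" by simp
    qed
    then show ?thesis using Cmem by blast
  qed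
  have cardC: "card (C x) = card G" for x
    unfolding C_def by (rule card_image) (auto simp: inj_on_def)
  have qeq: "E (2^(k-1) * lam z z) = E (qk lam k (C x))" if zC: "z \<in> C x" for z x
  proof -
    define s where "s = (SOME s. s \<in> C x)"
    have sC: "s \<in> C x" unfolding s_def using xC by (rule someI)
    have qk: "qk lam k (C x) = 2^(k-1) * lam s s" unfolding qk_def s_def Let_def by simp
    have gG: "z - s \<in> G" using zC sC Cmem Gdiff[of "z - x" "s - x"] by simp
    then have gR: "z - s \<in> Q.R UNIV" using RG' G_def by simp
    define g where "g = z - s"
    have zsg: "z = s + g" unfolding g_def by simp
    have "2^(k-1) * lam (s + g) (s + g) \<doteq> 2^(k-1) * lam s s + 2^(k-1) * lam g g + 2^k * lam s g"
      by (rule Q.q_add)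
    moreover have "2^(k-1) * lam g g \<in> \<int>" using qR gR g_def by blast
    moreover have "2^k * lam s g \<in> \<int>"
    proof -
      have "2^k * lam g s \<in> \<int>" using gR g_def unfolding Q.R_def by blast
      then show ?thesis using Q.b_Ints_sym by blast
    qed
    ultimately have "2^(k-1) * lam z z \<doteq> 2^(k-1) * lam s s"
      using zsg zeq_drop[of _ "2^(k-1) * lam s s" "2^(k-1) * lam g g + 2^k * lam s g"] Ints_add
      by (simp add: add.assoc)
    then show ?thesis unfolding qk by (rule zeq_E)
  qed
  have finH: "finite (Hk k :: 'a set set)" by simp
  have disj: "\<forall>A\<in>(Hk k :: 'a set set). \<forall>B\<in>Hk k. A \<noteq> B \<longrightarrow> A \<inter> B = {}"
  proof (intro ballI impI)
    fix A B :: "'a set" assume "A \<in> Hk k" "B \<in> Hk k" "A \<noteq> B"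
    then obtain x y where xy: "A = C x" "B = C y" using HkC by auto
    show "A \<inter> B = {}"
    proof (rule ccontr)
      assume "A \<inter> B \<noteq> {}"
      then obtain z where "z \<in> C x" "z \<in> C y" using xy by auto
      then have "C x = C y" using Ceq by metis
      then show False using xy \<open>A \<noteq> B\<close> by simp
    qed
  qed
  have UH: "\<Union>(Hk k) = (UNIV::'a set)" using HkC xC by auto
  have "Q.S UNIV = (\<Sum>x\<in>\<Union>(Hk k). E (2^(k-1) * lam x x))" unfolding Q.S_def UH ..
  also have "\<dots> = (\<Sum>X\<in>Hk k. \<Sum>x\<in>X. E (2^(k-1) * lam x x))"
    using sum.Union_disjoint[of "Hk k" "\<lambda>x. E (2^(k-1) * lam x x)"] disj by simp
  also have "\<dots> = (\<Sum>X\<in>Hk k. of_nat (card G) * E (qk lam k X))"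
  proof (rule sum.cong)
    fix X :: "'a set" assume "X \<in> Hk k"
    then obtain x where X: "X = C x" using HkC by auto
    have "(\<Sum>z\<in>X. E (2^(k-1) * lam z z)) = (\<Sum>z\<in>X. E (qk lam k X))"
      using qeq X by (intro sum.cong) auto
    then show "(\<Sum>z\<in>X. E (2^(k-1) * lam z z)) = of_nat (card G) * E (qk lam k X)"
      using cardC X by simp
  qed simp
  finally have SH: "Q.S UNIV = of_nat (card G) * (\<Sum>X\<in>Hk k. E (qk lam k X))"
    by (simp add: sum_distrib_left)
  have "card (UNIV::'a set) = (\<Sum>x\<in>\<Union>(Hk k :: 'a set set). (1::nat))"
    unfolding UH by simp
  also have "\<dots> = (\<Sum>X\<in>(Hk k :: 'a set set). \<Sum>x\<in>X. (1::nat))"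
    using sum.Union_disjoint[of "Hk k :: 'a set set" "\<lambda>x. (1::nat)"] disj by simp
  also have "\<dots> = (\<Sum>X\<in>(Hk k :: 'a set set). card X)" by simp
  finally have "card (UNIV::'a set) = (\<Sum>X\<in>(Hk k :: 'a set set). card X)" .
  also have "\<dots> = (\<Sum>X\<in>(Hk k :: 'a set set). card G)"
    by (rule sum.cong) (use HkC cardC in auto)
  also have "\<dots> = card (Hk k :: 'a set set) * card G" by simp
  finally have cardU: "card (UNIV::'a set) = card (Hk k :: 'a set set) * card G" .
  have Gpos: "card G > 0" using G0 card_gt_0_iff[of G] by (auto simp: G_def)
  have Hpos: "card (Hk k :: 'a set set) > 0" using HkC finH by (simp add: card_gt_0_iff)
  define h where "h = real (card (Hk k :: 'a set set))"
  define g where "g = real (card G)"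
  have hpos: "h > 0" "g > 0" using Hpos Gpos by (simp_all add: h_def g_def)
  have sq: "sqrt (real (card (UNIV::'a set) * card G)) = sqrt h * g"
    unfolding cardU h_def g_def using hpos by (simp add: real_sqrt_mult g_def)
  have gam: "gammak lam k = complex_of_real (1 / sqrt h) * (\<Sum>X\<in>Hk k. E (qk lam k X))"
    unfolding gammak_def E_def h_def by simp
  have "gammak lam k = \<zeta>"
  proof -
    have "(\<Sum>X\<in>Hk k. E (qk lam k X)) = Q.S UNIV / complex_of_real g"
      using SH hpos G0 by (auto simp: g_def field_simps)
    also have "\<dots> = \<zeta> * complex_of_real (sqrt h * g) / complex_of_real g"
      using z(2) RG' sq G_def by simp
    also have "\<dots> = \<zeta> * (complex_of_real (sqrt h * g) / complex_of_real g)" by simp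
    also have "complex_of_real (sqrt h * g) / complex_of_real g = complex_of_real (sqrt h)"
      using hpos by simp
    finally have "(\<Sum>X\<in>Hk k. E (qk lam k X)) = \<zeta> * complex_of_real (sqrt h)" .
    moreover have "complex_of_real (1 / sqrt h) * complex_of_real (sqrt h) = 1"
      using hpos by (simp flip: of_real_mult)
    ultimately show ?thesis unfolding gam by (metis mult.left_commute mult.right_neutral)
  qed
  then show "gammak lam k ^ 8 = 1" using z(1) by simp
  show "gammak lam k = (\<Sum>x\<in>UNIV. E (2^(k-1) * lam x x)) /
           complex_of_real (sqrt (real (card (UNIV::'a set) * card (Gk k :: 'a set))))"
    using \<open>gammak lam k = \<zeta>\<close> z(2) RG' sq hpos unfolding Q.S_def G_def
    by (simp add: field_simps)
qed


lemma tor_of_two_group: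
  assumes "two_group TYPE('a::{finite,ab_group_add})"
  shows "\<forall>y::'a. \<exists>n. p2 n y = 0"
  using assms unfolding two_group_def by (simp add: p2_nmul)

lemma p2_pair: "p2 n (x, y) = (p2 n x, p2 n y)"
  by (simp add: p2_nmul nmul_pair)

lemma p2_more: assumes "p2 n x = 0" shows "p2 (n + m) x = 0"
proof -
  have "p2 (n + m) x = nmul (2^m * 2^n) x" by (simp add: p2_nmul power_add mult.commute)
  also have "\<dots> = nmul (2^m) (nmul (2^n) x)" by (rule nmul_mult)
  finally show ?thesis using assms by (simp add: p2_nmul)
qed

lemma tor_prod:
  assumes "\<forall>y::'a::ab_group_add. \<exists>n. p2 n y = 0" "\<forall>y::'b::ab_group_add. \<exists>n. p2 n y = 0"
  shows "\<forall>y::'a \<times> 'b. \<exists>n. p2 n y = 0"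
proof
  fix y :: "'a \<times> 'b"
  obtain a b where y: "y = (a, b)" by (cases y)
  obtain n where n: "p2 n a = 0" using assms(1) by blast
  obtain m where m: "p2 m b = 0" using assms(2) by blast
  have "p2 (n + m) a = 0" using p2_more[OF n] .
  moreover have "p2 (m + n) b = 0" using p2_more[OF m] .
  ultimately show "\<exists>n. p2 n y = 0" using y by (intro exI[of _ "n + m"]) (simp add: p2_pair add.commute zero_prod_def)
qed

lemma orth_eval[simp]: "orth_sum lam lam' (a, b) (c, d) = lam a c + lam' b d"
  by (simp add: orth_sum_def)

lemma lp_0r: assumes "linking_pairing lam" shows "lam z 0 \<in> \<int>"
proof -
  have "lam z (0+0) - lam z 0 - lam z 0 \<in> \<int>" by (rule lp_add2[OF assms])
  then have "- lam z 0 \<in> \<int>" by simp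
  then show ?thesis using Ints_minus[of "- lam z 0"] by simp
qed

lemma lp_prod:
  assumes lp: "linking_pairing lam" and lp': "linking_pairing lam'"
  shows "linking_pairing (orth_sum lam lam')"
  unfolding linking_pairing_def
proof (intro conjI allI impI)
  fix x y z :: "'a \<times> 'b"
  obtain x1 x2 y1 y2 z1 z2 where p: "x = (x1,x2)" "y = (y1,y2)" "z = (z1,z2)"
    by (cases x, cases y, cases z) auto
  have "(lam (x1+y1) z1 - lam x1 z1 - lam y1 z1) + (lam' (x2+y2) z2 - lam' x2 z2 - lam' y2 z2) \<in> \<int>"
    using lp_add1[OF lp] lp_add1[OF lp'] Ints_add by blast
  then show "orth_sum lam lam' (x + y) z - orth_sum lam lam' x z - orth_sum lam lam' y z \<in> \<int>"
    using p by (simp add: algebra_simps)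
  have "(lam x1 (y1+z1) - lam x1 y1 - lam x1 z1) + (lam' x2 (y2+z2) - lam' x2 y2 - lam' x2 z2) \<in> \<int>"
    using lp_add2[OF lp] lp_add2[OF lp'] Ints_add by blast
  then show "orth_sum lam lam' x (y + z) - orth_sum lam lam' x y - orth_sum lam lam' x z \<in> \<int>"
    using p by (simp add: algebra_simps)
next
  fix x y :: "'a \<times> 'b"
  obtain x1 x2 y1 y2 where p: "x = (x1,x2)" "y = (y1,y2)" by (cases x, cases y) auto
  have "(lam x1 y1 - lam y1 x1) + (lam' x2 y2 - lam' y2 x2) \<in> \<int>"
    using lp_sym[OF lp] lp_sym[OF lp'] Ints_add by blast
  then show "orth_sum lam lam' x y - orth_sum lam lam' y x \<in> \<int>"
    using p by (simp add: algebra_simps)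
next
  fix x :: "'a \<times> 'b"
  assume h: "\<forall>y. orth_sum lam lam' x y \<in> \<int>"
  obtain x1 x2 where p: "x = (x1,x2)" by (cases x)
  have h2: "lam x1 y1 + lam' x2 y2 \<in> \<int>" for y1 y2 using h[rule_format, of "(y1,y2)"] p by simp
  have "lam x1 y1 \<in> \<int>" for y1
  proof -
    have "(lam x1 y1 + lam' x2 0) - (lam x1 0 + lam' x2 0) + lam x1 0 \<in> \<int>"
      using Ints_add[OF Ints_diff[OF h2[of y1 0] h2[of 0 0]] lp_0r[OF lp, of x1]] .
    then show ?thesis by simp
  qed
  then have "x1 = 0" using lp_ns[OF lp] by blast
  have "lam' x2 y2 \<in> \<int>" for y2
  proof -
    have "(lam x1 0 + lam' x2 y2) - (lam x1 0 + lam' x2 0) + lam' x2 0 \<in> \<int>"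
      using Ints_add[OF Ints_diff[OF h2[of 0 y2] h2[of 0 0]] lp_0r[OF lp', of x2]] .
    then show ?thesis by simp
  qed
  then have "x2 = 0" using lp_ns[OF lp'] by blast
  show "x = 0" using p \<open>x1 = 0\<close> \<open>x2 = 0\<close> by (simp add: zero_prod_def)
qed

lemma Gk_prod: "(Gk k :: ('a::ab_group_add \<times> 'b::ab_group_add) set) = Gk k \<times> Gk k"
  by (auto simp: Gk_def nmul_pair zero_prod_def)

lemma Pk_sub:
  assumes k: "k \<ge> 1" and X: "X \<in> Pk k" and x: "x \<in> X"
  shows "(x::'a::ab_group_add) \<in> Gk k"
proof -
  obtain z where z: "z \<in> Gk k" "X = (\<lambda>y. z + y) ` {a + nmul 2 b | a b. a \<in> Gk (k - 1) \<and> b \<in> Gk (k + 1)}"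
    using X unfolding Pk_def by blast
  then obtain a b where ab: "a \<in> Gk (k - 1)" "b \<in> Gk (k + 1)" "x = z + (a + nmul 2 b)" using x by blast
  obtain j where j: "k = Suc j" using k by (cases k) auto
  have "nmul (2^k) a = nmul 2 (nmul (2^j) a)" unfolding j using nmul_mult[of 2 "2^j" a] by simp
  also have "\<dots> = 0" using ab(1) j by (simp add: Gk_def)
  finally have a0: "nmul (2^k) a = 0" .
  have "nmul (2^k) (nmul 2 b) = nmul (2^(k+1)) b" using nmul_mult[of "2^k" 2 b] by (simp add: mult.commute)
  also have "\<dots> = 0" using ab(2) by (simp add: Gk_def)
  finally have b0: "nmul (2^k) (nmul 2 b) = 0" .
  show ?thesis using z(1) ab(3) a0 b0 by (simp add: Gk_def nmul_plus)
qed

lemma alt_prod: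
  fixes lam :: "'a::{finite,ab_group_add} \<Rightarrow> 'a \<Rightarrow> rat" and lam' :: "'b::{finite,ab_group_add} \<Rightarrow> 'b \<Rightarrow> rat"
  assumes k: "k \<ge> 1" and alt: "bk_alternating lam k" and alt': "bk_alternating lam' k"
  shows "bk_alternating (orth_sum lam lam') k"
  unfolding bk_alternating_def
proof (intro ballI)
  fix X x assume X: "X \<in> (Pk k :: ('a \<times> 'b) set set)" and x: "x \<in> X"
  have xG: "x \<in> Gk k" by (rule Pk_sub[OF k X x])
  obtain x1 x2 where p: "x = (x1, x2)" by (cases x)
  have "x1 \<in> Gk k" "x2 \<in> Gk k" using xG p Gk_prod by auto
  then have i1: "2^(k-1) * lam x1 x1 \<in> \<int>" and i2: "2^(k-1) * lam' x2 x2 \<in> \<int>"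
    using qvanish[OF k alt] qvanish[OF k alt'] by auto
  have "2^(k-1) * lam x1 x1 + 2^(k-1) * lam' x2 x2 \<in> \<int>" using i1 i2 by (rule Ints_add)
  then obtain m where m: "2^(k-1) * lam x1 x1 + 2^(k-1) * lam' x2 x2 = of_int m"
    by (auto elim: Ints_cases)
  obtain j where j: "k = Suc j" using k by (cases k) auto
  have t: "2^k * orth_sum lam lam' x x = 2 * of_int m"
    using m p unfolding j by (simp add: algebra_simps)
  show "bk (orth_sum lam lam') k x x = 0" unfolding bk_def t by simp
qed

lemma roots8:
  fixes z :: complex assumes "z ^ 8 = 1"
  shows "\<exists>u::int. u \<in> {0..7} \<and> z = exp (complex_of_real pi * \<i> * of_int u / 4)"
proof -
  have "z \<in> {z::complex. z^8 = 1}" using assms by simp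
  then obtain j :: nat where j: "j < 8" "z = exp (2 * of_real pi * \<i> * of_nat j / of_nat 8)"
    using complex_roots_unity[of 8] by auto
  have "z = exp (complex_of_real pi * \<i> * of_int (int j) / 4)"
    using j(2) by (simp add: mult_ac)
  then show ?thesis using j(1) by (intro exI[of _ "int j"]) auto
qed

lemma exp8_inj:
  fixes a b :: int
  assumes "exp (complex_of_real pi * \<i> * of_int a / 4) = exp (complex_of_real pi * \<i> * of_int b / 4)"
  shows "a mod 8 = b mod 8"
proof -
  obtain n :: int where n: "complex_of_real pi * \<i> * of_int a / 4 = complex_of_real pi * \<i> * of_int b / 4 + (of_int (2 * n) * pi) * \<i>"
    using assms exp_eq by blast
  then have "complex_of_real pi * \<i> * (of_int a - of_int b - 8 * of_int n) = 0"
    by (simp add: field_simps)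
  then have "(of_int (a - b - 8 * n) :: complex) = 0" by simp
  then have "a - b - 8 * n = 0" by (simp only: of_int_eq_0_iff)
  then show ?thesis by presburger
qed

lemma uk_spec:
  assumes "gammak lam k ^ 8 = 1"
  shows "uk lam k \<in> {0..7} \<and> gammak lam k = exp (complex_of_real pi * \<i> * of_int (uk lam k) / 4)"
  unfolding uk_def by (rule someI_ex) (rule roots8[OF assms])


lemma gamma_prod:
  fixes lam :: "'a::{finite,ab_group_add} \<Rightarrow> 'a \<Rightarrow> rat" and lam' :: "'b::{finite,ab_group_add} \<Rightarrow> 'b \<Rightarrow> rat"
  assumes lp: "linking_pairing lam" and lp': "linking_pairing lam'"
    and tor: "\<forall>y::'a. \<exists>n. p2 n y = 0" and tor': "\<forall>y::'b. \<exists>n. p2 n y = 0"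
    and k: "k \<ge> 1" and alt: "bk_alternating lam k" and alt': "bk_alternating lam' k"
  shows "gammak (orth_sum lam lam') k = gammak lam k * gammak lam' k"
proof -
  have lpp: "linking_pairing (orth_sum lam lam')" by (rule lp_prod[OF lp lp'])
  have altp: "bk_alternating (orth_sum lam lam') k" by (rule alt_prod[OF k alt alt'])
  have torp: "\<forall>y::'a \<times> 'b. \<exists>n. p2 n y = 0" by (rule tor_prod[OF tor tor'])
  note g1 = gamma_formula(2)[OF lp tor k alt]
  note g2 = gamma_formula(2)[OF lp' tor' k alt']
  note g3 = gamma_formula(2)[OF lpp torp k altp]
  define S1 where "S1 = (\<Sum>x\<in>(UNIV::'a set). E (2^(k-1) * lam x x))"
  define S2 where "S2 = (\<Sum>x\<in>(UNIV::'b set). E (2^(k-1) * lam' x x))"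
  define n1 where "n1 = real (card (UNIV::'a set) * card (Gk k :: 'a set))"
  define n2 where "n2 = real (card (UNIV::'b set) * card (Gk k :: 'b set))"
  have "(\<Sum>p\<in>(UNIV::('a \<times> 'b) set). E (2^(k-1) * orth_sum lam lam' p p))
      = (\<Sum>p\<in>(UNIV::'a set) \<times> (UNIV::'b set). E (2^(k-1) * orth_sum lam lam' p p))"
    by (simp add: UNIV_Times_UNIV)
  also have "\<dots> = (\<Sum>(x,y)\<in>(UNIV::'a set) \<times> (UNIV::'b set). E (2^(k-1) * lam x x) * E (2^(k-1) * lam' y y))"
    by (rule sum.cong) (auto simp: E_add[symmetric] distrib_left)
  also have "\<dots> = (\<Sum>x\<in>(UNIV::'a set). \<Sum>y\<in>(UNIV::'b set). E (2^(k-1) * lam x x) * E (2^(k-1) * lam' y y))"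
    by (rule sum.cartesian_product[symmetric])
  also have "\<dots> = S1 * S2" unfolding S1_def S2_def by (simp add: sum_product)
  finally have Sp: "(\<Sum>p\<in>(UNIV::('a \<times> 'b) set). E (2^(k-1) * orth_sum lam lam' p p)) = S1 * S2" .
  have cU: "card (UNIV::('a \<times> 'b) set) = card (UNIV::'a set) * card (UNIV::'b set)"
    by (simp add: UNIV_Times_UNIV[symmetric] card_cartesian_product del: UNIV_Times_UNIV)
  have cG: "card (Gk k :: ('a \<times> 'b) set) = card (Gk k :: 'a set) * card (Gk k :: 'b set)"
    by (simp add: Gk_prod card_cartesian_product)
  have np: "real (card (UNIV::('a \<times> 'b) set) * card (Gk k :: ('a \<times> 'b) set)) = n1 * n2"
    unfolding cU cG n1_def n2_def by simp
  have "gammak (orth_sum lam lam') k = (S1 * S2) / complex_of_real (sqrt (n1 * n2))"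
    using g3 Sp np by simp
  also have "\<dots> = (S1 / complex_of_real (sqrt n1)) * (S2 / complex_of_real (sqrt n2))"
    by (simp add: real_sqrt_mult)
  also have "\<dots> = gammak lam k * gammak lam' k"
    using g1 g2 unfolding S1_def S2_def n1_def n2_def by simp
  finally show ?thesis .
qed

theorem lemma5p15:
  fixes lam :: "'a::{finite,ab_group_add} \<Rightarrow> 'a \<Rightarrow> rat"
    and lam' :: "'b::{finite,ab_group_add} \<Rightarrow> 'b \<Rightarrow> rat"
    and k :: nat
  assumes "two_group TYPE('a)" and "two_group TYPE('b)"
    and "linking_pairing lam" and "linking_pairing lam'"
    and "k \<ge> 1"
    and "bk_alternating lam k" and "bk_alternating lam' k"
  shows "bk_alternating (orth_sum lam lam') k \<and>
         uk (orth_sum lam lam') k mod 8 = (uk lam k + uk lam' k) mod 8"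
proof -
  have tor: "\<forall>y::'a. \<exists>n. p2 n y = 0" by (rule tor_of_two_group[OF assms(1)])
  have tor': "\<forall>y::'b. \<exists>n. p2 n y = 0" by (rule tor_of_two_group[OF assms(2)])
  have torp: "\<forall>y::'a \<times> 'b. \<exists>n. p2 n y = 0" by (rule tor_prod[OF tor tor'])
  have lpp: "linking_pairing (orth_sum lam lam')" by (rule lp_prod[OF assms(3,4)])
  have altp: "bk_alternating (orth_sum lam lam') k" by (rule alt_prod[OF assms(5,6,7)])
  have u1: "gammak lam k = exp (complex_of_real pi * \<i> * of_int (uk lam k) / 4)"
    using uk_spec[OF gamma_formula(1)[OF assms(3) tor assms(5,6)]] by blast
  have u2: "gammak lam' k = exp (complex_of_real pi * \<i> * of_int (uk lam' k) / 4)"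
    using uk_spec[OF gamma_formula(1)[OF assms(4) tor' assms(5,7)]] by blast
  have u3: "gammak (orth_sum lam lam') k = exp (complex_of_real pi * \<i> * of_int (uk (orth_sum lam lam') k) / 4)"
    using uk_spec[OF gamma_formula(1)[OF lpp torp assms(5) altp]] by blast
  have "gammak (orth_sum lam lam') k = gammak lam k * gammak lam' k"
    by (rule gamma_prod[OF assms(3,4) tor tor' assms(5,6,7)])
  also have "\<dots> = exp (complex_of_real pi * \<i> * of_int (uk lam k) / 4 + complex_of_real pi * \<i> * of_int (uk lam' k) / 4)"
    unfolding u1 u2 by (simp add: exp_add)
  also have "\<dots> = exp (complex_of_real pi * \<i> * of_int (uk lam k + uk lam' k) / 4)"
    by (simp add: field_simps)
  finally have "exp (complex_of_real pi * \<i> * of_int (uk (orth_sum lam lam') k) / 4)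
      = exp (complex_of_real pi * \<i> * of_int (uk lam k + uk lam' k) / 4)" using u3 by simp
  then have "uk (orth_sum lam lam') k mod 8 = (uk lam k + uk lam' k) mod 8" by (rule exp8_inj)
  then show ?thesis using altp by blast
qed


end
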